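(* Let $k\ge 1$ and $n_1,\dots,n_k\in\mathbb{Z}$. The group \[ G=\left\langle a,t,b_1,\dots,b_k \;\middle|\; at=ta,\; b_1^{-1}tb_1=a^{n_1}t,\;\dots,\; b_k^{-1}tb_k=a^{n_k}t\right\rangle \] is asynchronously automatic.
   Context: Paths $w,u$ in a Cayley graph (parametrized by arc length, eventually constant) asynchronously $K$-fellow travel if there is a non-decreasing proper continuous function $\phi:[0,\infty)\to[0,\infty)$ with $d(w(s),u(\phi(s)))\le K$ for all $s\ge 0$ (so every point of $w$ is within $K$ of some point of $u$ and vice versa). A group $G$ with finite generating set $A$ is asynchronously automatic if there is a regular language $L$ over $A\cup A^{-1}$ whose evaluation map $L\to G$ is surjective and finite-to-one (no element of $G$ has infinitely many preimages), and a constant $K$ such that whenever $w,u\in L$ and $\overline{u}=\overline{wx}$ for some $x\in A\cup A^{-1}\cup\{1\}$, the paths of $w$ and $u$ in the Cayley graph asynchronously $K$-fellow travel. Such groups are called linearly mismatched free-by-cyclic groups in the paper. *)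

theory Defs
  imports "HOL-Analysis.Analysis"
begin

datatype gen = Ga | Gt | Gb nat

text \<open>A letter is a generator together with an inversion flag (True = inverse letter).\<close>
type_synonym letter = "gen \<times> bool"

definition gens :: "nat \<Rightarrow> gen set" where
  "gens k = {Ga, Gt} \<union> {Gb i | i. 1 \<le> i \<and> i \<le> k}"

definition alphabet :: "nat \<Rightarrow> letter set" where
  "alphabet k = {(g, e). g \<in> gens k}"

definition inv_letter :: "letter \<Rightarrow> letter" where
  "inv_letter x = (fst x, \<not> snd x)"

definition inv_word :: "letter list \<Rightarrow> letter list" where
  "inv_word w = rev (map inv_letter w)"

definition gpow :: "gen \<Rightarrow> int \<Rightarrow> letter list" where
  "gpow g n = (if 0 \<le> n then replicate (nat n) (g, False) else replicate (nat (- n)) (g, True))"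

definition relators :: "nat \<Rightarrow> (nat \<Rightarrow> int) \<Rightarrow> letter list set" where
  "relators k ns =
     {[(Ga, False), (Gt, False), (Ga, True), (Gt, True)]} \<union>
     {[(Gb i, True), (Gt, False), (Gb i, False), (Gt, True)] @ gpow Ga (- ns i) | i. 1 \<le> i \<and> i \<le> k}"

inductive eqG :: "nat \<Rightarrow> (nat \<Rightarrow> int) \<Rightarrow> letter list \<Rightarrow> letter list \<Rightarrow> bool"
  for k :: nat and ns :: "nat \<Rightarrow> int" where
  refl: "eqG k ns u u"
| sym: "eqG k ns u v \<Longrightarrow> eqG k ns v u"
| trans: "eqG k ns u v \<Longrightarrow> eqG k ns v w \<Longrightarrow> eqG k ns u w"
| cong: "eqG k ns u v \<Longrightarrow> eqG k ns (p @ u @ q) (p @ v @ q)"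
| cancel: "eqG k ns [x, inv_letter x] []"
| rel: "r \<in> relators k ns \<Longrightarrow> eqG k ns r []"

definition dword :: "nat \<Rightarrow> (nat \<Rightarrow> int) \<Rightarrow> letter list \<Rightarrow> letter list \<Rightarrow> real" where
  "dword k ns u v = real (LEAST n. \<exists>z \<in> lists (alphabet k). length z = n \<and> eqG k ns (u @ z) v)"

text \<open>A point of the Cayley graph: (h, a, \<theta>) is the point at distance \<theta> \<in> [0,1] from the
  vertex h along the edge from h to h a (a a generator).\<close>
type_synonym cpoint = "letter list \<times> gen \<times> real"

text \<open>Path metric of the Cayley graph (every edge isometric to [0,1]).\<close>
definition cdist :: "nat \<Rightarrow> (nat \<Rightarrow> int) \<Rightarrow> cpoint \<Rightarrow> cpoint \<Rightarrow> real" where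
  "cdist k ns P Q =
    (case P of (h, a, \<theta>) \<Rightarrow> case Q of (h', a', \<eta>) \<Rightarrow>
      (let ha = h @ [(a, False)]; ha' = h' @ [(a', False)];
           d4 = min (min (\<theta> + dword k ns h h' + \<eta>) (\<theta> + dword k ns h ha' + (1 - \<eta>)))
                    (min ((1 - \<theta>) + dword k ns ha h' + \<eta>) ((1 - \<theta>) + dword k ns ha ha' + (1 - \<eta>)))
       in if eqG k ns h h' \<and> a = a' then min \<bar>\<theta> - \<eta>\<bar> d4 else d4))"

definition wpath :: "letter list \<Rightarrow> real \<Rightarrow> cpoint" where
  "wpath w s =
    (if real (length w) \<le> s then (w, Ga, 0)
     else (let i = nat \<lfloor>s\<rfloor>; \<theta> = s - real i; x = w ! i; p = take i w in
           if snd x then (p @ [x], fst x, 1 - \<theta>) else (p, fst x, \<theta>)))"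

definition async_fellow_travel ::
    "nat \<Rightarrow> (nat \<Rightarrow> int) \<Rightarrow> real \<Rightarrow> letter list \<Rightarrow> letter list \<Rightarrow> bool" where
  "async_fellow_travel k ns K w u \<longleftrightarrow>
     (\<exists>\<phi> :: real \<Rightarrow> real.
        \<phi> ` {0..} \<subseteq> {0..} \<and> mono_on {0..} \<phi> \<and> continuous_on {0..} \<phi> \<and>
        proper_map (top_of_set {0..}) (top_of_set {0..}) \<phi> \<and>
        (\<forall>s \<ge> 0. cdist k ns (wpath w s) (wpath u (\<phi> s)) \<le> K))"

definition regular_lang :: "'a set \<Rightarrow> 'a list set \<Rightarrow> bool" where
  "regular_lang S L \<longleftrightarrow> L \<subseteq> lists S \<and>
     (\<exists>(Q :: nat set) q0 (\<delta> :: nat \<Rightarrow> 'a \<Rightarrow> nat) F.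
        finite Q \<and> q0 \<in> Q \<and> F \<subseteq> Q \<and> (\<forall>q\<in>Q. \<forall>x\<in>S. \<delta> q x \<in> Q) \<and>
        L = {w \<in> lists S. foldl \<delta> q0 w \<in> F})"

definition async_automatic :: "nat \<Rightarrow> (nat \<Rightarrow> int) \<Rightarrow> bool" where
  "async_automatic k ns \<longleftrightarrow>
     (\<exists>L K. regular_lang (alphabet k) L \<and>
        (\<forall>v \<in> lists (alphabet k). \<exists>w \<in> L. eqG k ns w v) \<and>
        (\<forall>v \<in> lists (alphabet k). finite {w \<in> L. eqG k ns w v}) \<and>
        (\<forall>w \<in> L. \<forall>u \<in> L. \<forall>x \<in> alphabet k.
            (eqG k ns u (w @ [x]) \<longrightarrow> async_fellow_travel k ns K w u) \<and>
            (eqG k ns u w \<longrightarrow> async_fellow_travel k ns K w u)))"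

end

theory Submission
  imports Defs
begin


type_synonym syl = "letter \<times> int"
type_synonym st = "int \<times> int \<times> syl list"

fun bn :: "(nat \<Rightarrow> int) \<Rightarrow> letter \<Rightarrow> int" where
  "bn ns (Gb i, e) = ns i" | "bn ns (Ga, e) = 0" | "bn ns (Gt, e) = 0"

definition own :: "(nat \<Rightarrow> int) \<Rightarrow> int \<Rightarrow> letter \<Rightarrow> int" where
  "own ns d s = (if snd s then 0 else d * bn ns s)"
definition negc :: "(nat \<Rightarrow> int) \<Rightarrow> int \<Rightarrow> letter \<Rightarrow> int" where
  "negc ns d s = (if snd s then - (d * bn ns s) else 0)"
definition hnx :: "(nat \<Rightarrow> int) \<Rightarrow> int \<Rightarrow> int \<Rightarrow> syl list \<Rightarrow> int" where
  "hnx ns d e r = (case r of [] \<Rightarrow> e | x # _ \<Rightarrow> negc ns d (fst x))"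

fun twn :: "(nat \<Rightarrow> int) \<Rightarrow> int \<Rightarrow> int \<Rightarrow> syl list \<Rightarrow> syl list" where
  "twn ns d e [] = []"
| "twn ns d e (x # r) = (fst x, snd x + own ns d (fst x) + hnx ns d e r) # twn ns d e r"

definition twist :: "(nat \<Rightarrow> int) \<Rightarrow> int \<Rightarrow> int \<times> syl list \<Rightarrow> int \<times> syl list" where
  "twist ns d p = (fst p + hnx ns d 0 (snd p), twn ns d 0 (snd p))"

definition addlast :: "int \<Rightarrow> syl list \<Rightarrow> syl list" where
  "addlast x r = butlast r @ [(fst (last r), snd (last r) + x)]"

definition addl :: "int \<Rightarrow> int \<times> syl list \<Rightarrow> int \<times> syl list" where
  "addl x p = (if snd p = [] then (fst p + x, []) else (fst p, addlast x (snd p)))"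

definition pushb :: "letter \<Rightarrow> int \<times> syl list \<Rightarrow> int \<times> syl list" where
  "pushb s p = (if snd p \<noteq> [] \<and> last (snd p) = (inv_letter s, 0) then (fst p, butlast (snd p))
                else (fst p, snd p @ [(s, 0)]))"

fun act :: "(nat \<Rightarrow> int) \<Rightarrow> st \<Rightarrow> letter \<Rightarrow> st" where
  "act ns (m, p) (Gt, e) = (if e then (m - 1, twist ns 1 p) else (m + 1, twist ns (-1) p))"
| "act ns (m, p) (Ga, e) = (m, addl (if e then -1 else 1) p)"
| "act ns (m, p) (Gb i, e) = (m, pushb (Gb i, e) p)"

definition acts :: "(nat \<Rightarrow> int) \<Rightarrow> st \<Rightarrow> letter list \<Rightarrow> st" where
  "acts ns s w = foldl (act ns) s w"

fun isb :: "letter \<Rightarrow> bool" where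
  "isb (Gb i, e) = True" | "isb (Ga, e) = False" | "isb (Gt, e) = False"

fun noc :: "syl list \<Rightarrow> bool" where
  "noc (x # y # r) = ((fst y = inv_letter (fst x) \<longrightarrow> snd x \<noteq> 0) \<and> noc (y # r))"
| "noc _ = True"

definition vst :: "int \<times> syl list \<Rightarrow> bool" where
  "vst p \<longleftrightarrow> (\<forall>x \<in> set (snd p). isb (fst x)) \<and> noc (snd p)"

lemma inv_inv[simp]: "inv_letter (inv_letter x) = x"
  by (simp add: inv_letter_def)
lemma inv_fst[simp]: "fst (inv_letter x) = fst x" and inv_snd[simp]: "snd (inv_letter x) = (\<not> snd x)"
  by (simp_all add: inv_letter_def)
lemma inv_eq_iff[simp]: "inv_letter x = inv_letter y \<longleftrightarrow> x = y"
  by (metis inv_inv)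
lemma bn_inv[simp]: "bn ns (inv_letter x) = bn ns x"
  by (cases x; cases "fst x") (auto simp: inv_letter_def)
lemma isb_inv[simp]: "isb (inv_letter x) = isb x"
  by (cases x; cases "fst x") (auto simp: inv_letter_def)

lemma own_add: "own ns (d + d') s = own ns d s + own ns d' s"
  by (simp add: own_def algebra_simps)
lemma negc_add: "negc ns (d + d') s = negc ns d s + negc ns d' s"
  by (simp add: negc_def algebra_simps)
lemma hnx_add: "hnx ns (d + d') (e + e') r = hnx ns d e r + hnx ns d' e' r"
  by (cases r) (auto simp: hnx_def negc_add)
lemma own0[simp]: "own ns 0 s = 0" and negc0[simp]: "negc ns 0 s = 0"
  by (simp_all add: own_def negc_def)
lemma hnx0[simp]: "hnx ns 0 0 r = 0"
  by (cases r) (auto simp: hnx_def)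
lemma own_negc_inv: "own ns d s + negc ns d (inv_letter s) = 0"
  by (simp add: own_def negc_def)

lemma map_fst_twn[simp]: "map fst (twn ns d e r) = map fst r"
  by (induction r) auto
lemma twn_Nil_iff[simp]: "twn ns d e r = [] \<longleftrightarrow> r = []"
  by (cases r) auto
lemma length_twn[simp]: "length (twn ns d e r) = length r"
  by (induction r) auto
lemma hnx_twn[simp]: "hnx ns d e (twn ns d' e' r) = hnx ns d e r"
  by (cases r) (auto simp: hnx_def)

lemma twn_twn: "twn ns d e (twn ns d' e' r) = twn ns (d + d') (e + e') r"
  by (induction r) (auto simp: own_add hnx_add)
lemma twn_0[simp]: "twn ns 0 0 r = r"
  by (induction r) auto

lemma twist_twist: "twist ns d (twist ns d' p) = twist ns (d + d') p"
  by (simp add: twist_def twn_twn hnx_add[of ns d d' 0 0, simplified])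
lemma twist_0[simp]: "twist ns 0 p = p"
  by (simp add: twist_def)

lemma set_twn_fst: "fst ` set (twn ns d e r) = fst ` set r"
  by (metis list.set_map map_fst_twn)

lemma noc_twn: "noc r \<Longrightarrow> noc (twn ns d e r)"
proof (induction r rule: noc.induct)
  case (1 x y r)
  then show ?case
    using own_negc_inv[of ns d "fst x"] by (auto simp: hnx_def)
qed auto

lemma isb_twn: "(\<forall>x\<in>set r. isb (fst x)) \<Longrightarrow> \<forall>x\<in>set (twn ns d e r). isb (fst x)"
  by (induction r) auto

lemma vst_twist: "vst p \<Longrightarrow> vst (twist ns d p)"
  unfolding vst_def twist_def using isb_twn[of "snd p" ns d 0] noc_twn[of "snd p" ns d 0] by simp

lemma noc_snoc: "noc (r @ [y]) \<longleftrightarrow> noc r \<and> (r \<noteq> [] \<longrightarrow> fst y = inv_letter (fst (last r)) \<longrightarrow> snd (last r) \<noteq> 0)"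
proof (induction r rule: noc.induct)
  case (1 x y r) then show ?case by auto
next
  case ("2_1") then show ?case by auto
next
  case ("2_2" v) then show ?case by auto
qed

lemma noc_butlast: "noc r \<Longrightarrow> noc (butlast r)"
  by (metis append_butlast_last_id noc_snoc butlast.simps(1))

lemma noc_addlast: "r \<noteq> [] \<Longrightarrow> noc r \<Longrightarrow> noc (addlast x r)"
  unfolding addlast_def
  by (metis append_butlast_last_id noc_snoc fst_conv)

lemma addlast_ne[simp]: "addlast x r \<noteq> []" by (simp add: addlast_def)

lemma isb_addlast: "(\<forall>x\<in>set r. isb (fst x)) \<Longrightarrow> r \<noteq> [] \<Longrightarrow> \<forall>x\<in>set (addlast c r). isb (fst x)"
  unfolding addlast_def by (auto dest: in_set_butlastD)

lemma vst_addl: "vst p \<Longrightarrow> vst (addl x p)"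
  unfolding vst_def addl_def using isb_addlast[of "snd p" x] noc_addlast[of "snd p" x] by simp

lemma vst_pushb: "vst p \<Longrightarrow> isb s \<Longrightarrow> vst (pushb s p)"
  unfolding vst_def pushb_def
  by (auto simp: noc_butlast noc_snoc in_set_butlastD)
     (metis inv_inv prod.collapse)

lemma vst_act: "vst (snd s) \<Longrightarrow> vst (snd (act ns s x))"
  by (cases s; cases x; cases "fst x") (auto simp: vst_twist vst_addl vst_pushb)

lemma vst_acts: "vst (snd s) \<Longrightarrow> vst (snd (acts ns s w))"
  unfolding acts_def by (induction w arbitrary: s) (auto simp: vst_act)

lemma acts_append[simp]: "acts ns s (u @ v) = acts ns (acts ns s u) v"
  by (simp add: acts_def)
lemma acts_Nil[simp]: "acts ns s [] = s" by (simp add: acts_def)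
lemma acts_Cons[simp]: "acts ns s (x # v) = acts ns (act ns s x) v" by (simp add: acts_def)

lemma addlast_addlast: "r \<noteq> [] \<Longrightarrow> addlast x (addlast y r) = addlast (y + x) r"
  by (simp add: addlast_def algebra_simps)
lemma addlast_0[simp]: "r \<noteq> [] \<Longrightarrow> addlast 0 r = r"
  by (simp add: addlast_def)
lemma addl_addl: "addl x (addl y p) = addl (y + x) p"
  by (auto simp: addl_def addlast_addlast algebra_simps)
lemma addl_0[simp]: "addl 0 p = p"
  by (cases p) (auto simp: addl_def)

lemma pushb_inv: "vst p \<Longrightarrow> isb s \<Longrightarrow> pushb (inv_letter s) (pushb s p) = p"
proof -
  assume v: "vst p" and s: "isb s"
  obtain c r where p: "p = (c, r)" by (cases p)
  show ?thesis
  proof (cases "r \<noteq> [] \<and> last r = (inv_letter s, 0)")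
    case True
    then obtain r0 where r: "r = r0 @ [(inv_letter s, 0)]" by (metis append_butlast_last_id)
    from v have "noc r" by (simp add: vst_def p)
    then have "r0 \<noteq> [] \<longrightarrow> fst (last r0) = s \<longrightarrow> snd (last r0) \<noteq> 0" unfolding r noc_snoc
      by auto
    then have n: "\<not> (r0 \<noteq> [] \<and> last r0 = (inv_letter (inv_letter s), 0))" by auto
    have 1: "pushb s (c, r) = (c, r0)" by (simp add: pushb_def r)
    have 2: "pushb (inv_letter s) (c, r0) = (c, r0 @ [(inv_letter s, 0)])"
      using n unfolding pushb_def by auto
    show ?thesis using 1 2 by (simp add: p r)
  next
    case False
    have 1: "pushb s (c, r) = (c, r @ [(s, 0)])" using False unfolding pushb_def by auto
    have 2: "pushb (inv_letter s) (c, r @ [(s, 0)]) = (c, r)" by (simp add: pushb_def)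
    show ?thesis using 1 2 by (simp add: p)
  qed
qed

lemma act_inv: "vst (snd st) \<Longrightarrow> act ns (act ns st x) (inv_letter x) = st"
proof -
  assume v: "vst (snd st)"
  obtain m p where st: "st = (m, p)" by (cases st)
  obtain g e where x: "x = (g, e)" by (cases x)
  show ?thesis
  proof (cases g)
    case Ga then show ?thesis by (simp add: st x inv_letter_def addl_addl)
  next
    case Gt then show ?thesis by (simp add: st x inv_letter_def twist_twist)
  next
    case (Gb i)
    have iv: "inv_letter (Gb i, e) = (Gb i, \<not> e)" by (simp add: inv_letter_def)
    have "pushb (Gb i, \<not> e) (pushb (Gb i, e) p) = p"
      using pushb_inv[of p "(Gb i, e)"] v unfolding iv st by simp
    then show ?thesis unfolding st x Gb iv by simp
  qed
qed


lemma gpow_nonneg: "0 \<le> c \<Longrightarrow> gpow g c = replicate (nat c) (g, False)"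
  by (simp add: gpow_def)
lemma gpow_neg: "c < 0 \<Longrightarrow> gpow g c = replicate (nat (- c)) (g, True)"
  by (simp add: gpow_def)

lemma acts_rep_a: "acts ns (m, p) (replicate n (Ga, e)) = (m, addl ((if e then -1 else 1) * int n) p)"
proof (induction n arbitrary: p)
  case (Suc n) then show ?case by (simp add: addl_addl algebra_simps)
qed simp

lemma acts_gpow_a: "acts ns (m, p) (gpow Ga c) = (m, addl c p)"
  by (cases "0 \<le> c") (simp_all add: gpow_def acts_rep_a)

lemma hnx_Nil[simp]: "hnx ns d e [] = e" by (simp add: hnx_def)

lemma hnx_addlast[simp]: "hnx ns d e (addlast x r) = (if r = [] then negc ns d (fst (last r)) else hnx ns d e r)"
  by (cases r) (auto simp: hnx_def addlast_def)

lemma twn_addlast: "r \<noteq> [] \<Longrightarrow> twn ns d e (addlast x r) = addlast x (twn ns d e r)"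
proof (induction r)
  case (Cons y r)
  show ?case
  proof (cases "r = []")
    case True then show ?thesis by (simp add: addlast_def hnx_def)
  next
    case False
    have "addlast x (y # r) = y # addlast x r" using False by (simp add: addlast_def)
    moreover have "addlast x (twn ns d e (y # r)) = (fst y, snd y + own ns d (fst y) + hnx ns d e r) # addlast x (twn ns d e r)"
      using False by (simp add: addlast_def)
    ultimately show ?thesis using Cons False by simp
  qed
qed simp

lemma twist_addl: "twist ns d (addl x p) = addl x (twist ns d p)"
  by (cases "snd p = []") (auto simp: twist_def addl_def twn_addlast)

lemma twn_append: "twn ns d e (A @ B) = twn ns d (hnx ns d e B) A @ twn ns d e B"
proof (induction A)
  case (Cons x A)
  have "hnx ns d e (A @ B) = hnx ns d (hnx ns d e B) A" by (cases A) (auto simp: hnx_def)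
  then show ?case using Cons by simp
qed simp

lemma twn_d0: "twn ns 0 e r = (if r = [] then [] else addlast e r)"
proof (induction r)
  case (Cons y r)
  then show ?case by (cases r) (auto simp: addlast_def hnx_def)
qed simp

lemma last_twn: "r \<noteq> [] \<Longrightarrow> last (twn ns d e r) = (fst (last r), snd (last r) + own ns d (fst (last r)) + e)"
proof (induction r)
  case (Cons y r) then show ?case by (cases r) (auto simp: hnx_def)
qed simp

lemma rel2_acts:
  assumes v: "vst p"
  shows "acts ns (m, p) ([(Gb i, True), (Gt, False), (Gb i, False), (Gt, True)] @ gpow Ga (- ns i)) = (m, p)"
proof -
  obtain c r where p: "p = (c, r)" by (cases p)
  let ?sm = "(Gb i, True)" and ?b = "(Gb i, False)"
  have ib: "inv_letter ?sm = ?b" "inv_letter ?b = ?sm" by (simp_all add: inv_letter_def)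
  have own1: "own ns d ?sm = 0" "own ns d ?b = d * ns i" for d by (simp_all add: own_def)
  have negc1: "negc ns d ?sm = - (d * ns i)" "negc ns d ?b = 0" for d by (simp_all add: negc_def)
  have key: "acts ns (m, p) [(Gb i, True), (Gt, False), (Gb i, False), (Gt, True)] = (m, addl (ns i) p)"
  proof (cases "r \<noteq> [] \<and> last r = (?b, 0)")
    case True
    then obtain r0 where r: "r = r0 @ [(?b, 0)]" by (metis append_butlast_last_id)
    from v have "noc r" by (simp add: vst_def p)
    then have nz: "r0 \<noteq> [] \<longrightarrow> fst (last r0) = ?sm \<longrightarrow> snd (last r0) \<noteq> 0" unfolding r noc_snoc
      using ib by auto
    have 1: "pushb ?sm (c, r) = (c, r0)" using ib by (simp add: pushb_def r)
    have nl: "\<not> (twn ns (-1) 0 r0 \<noteq> [] \<and> last (twn ns (-1) 0 r0) = (?sm, 0))"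
    proof
      assume a: "twn ns (-1) 0 r0 \<noteq> [] \<and> last (twn ns (-1) 0 r0) = (?sm, 0)"
      then have "r0 \<noteq> []" by simp
      with a have "fst (last r0) = ?sm" "snd (last r0) = 0"
        using last_twn[of r0 ns "-1" 0] own_def by (auto simp: own_def)
      with nz \<open>r0 \<noteq> []\<close> show False by simp
    qed
    have 2: "pushb ?b (twist ns (-1) (c, r0)) = (c + hnx ns (-1) 0 r0, twn ns (-1) 0 r0 @ [(?b, 0)])"
      using nl ib unfolding pushb_def twist_def by auto
    have h: "c + hnx ns (-1) 0 r0 + hnx ns 1 0 (twn ns (-1) 0 r0 @ [(?b, 0)]) = c"
      by (cases r0) (auto simp: hnx_def negc_def)
    have t: "twn ns 1 0 (twn ns (-1) 0 r0 @ [(?b, 0)]) = r0 @ [(?b, ns i)]"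
      by (simp add: twn_append hnx_def negc1 own1 twn_twn)
    have 3: "twist ns 1 (c + hnx ns (-1) 0 r0, twn ns (-1) 0 r0 @ [(?b, 0)]) = (c, r0 @ [(?b, ns i)])"
      using h t by (simp add: twist_def)
    have 4: "addl (ns i) p = (c, r0 @ [(?b, ns i)])" by (simp add: addl_def addlast_def p r)
    show ?thesis using 1 2 3 4 by (simp add: p)
  next
    case False
    have 1: "pushb ?sm (c, r) = (c, r @ [(?sm, 0)])" using False ib unfolding pushb_def by auto
    have tw: "twist ns (-1) (c, r @ [(?sm, 0)]) = (c + hnx ns (-1) 0 (r @ [(?sm, 0)]), twn ns (-1) (ns i) r @ [(?sm, 0)])"
      by (simp add: twist_def twn_append hnx_def negc1 own1)
    have 2: "pushb ?b (c + hnx ns (-1) 0 (r @ [(?sm, 0)]), twn ns (-1) (ns i) r @ [(?sm, 0)])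
             = (c + hnx ns (-1) 0 (r @ [(?sm, 0)]), twn ns (-1) (ns i) r)"
      using ib by (simp add: pushb_def)
    have 3: "twist ns 1 (c + hnx ns (-1) 0 (r @ [(?sm, 0)]), twn ns (-1) (ns i) r) = addl (ns i) (c, r)"
    proof (cases "r = []")
      case True then show ?thesis by (simp add: twist_def addl_def hnx_def negc1)
    next
      case False
      have "twn ns 1 0 (twn ns (-1) (ns i) r) = addlast (ns i) r" using False by (simp add: twn_twn twn_d0)
      moreover have "hnx ns (-1) 0 (r @ [(?sm, 0)]) + hnx ns 1 0 (twn ns (-1) (ns i) r) = 0"
        using False by (cases r) (auto simp: hnx_def negc_def)
      ultimately show ?thesis using False by (simp add: twist_def addl_def)
    qed
    show ?thesis using 1 tw 2 3 by (simp add: p)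
  qed
  show ?thesis using key by (simp add: acts_gpow_a addl_addl)
qed

lemma rel1_acts: "acts ns (m, p) [(Ga, False), (Gt, False), (Ga, True), (Gt, True)] = (m, p)"
  by (simp add: twist_addl twist_twist addl_addl)

lemma sound_aux: "eqG k ns u v \<Longrightarrow> \<forall>s. vst (snd s) \<longrightarrow> acts ns s u = acts ns s v"
proof (induction rule: eqG.induct)
  case (cong u v p q)
  show ?case
  proof (intro allI impI)
    fix s :: st assume "vst (snd s)"
    then have "vst (snd (acts ns s p))" by (rule vst_acts)
    then have "acts ns (acts ns s p) u = acts ns (acts ns s p) v" using cong.IH by blast
    then show "acts ns s (p @ u @ q) = acts ns s (p @ v @ q)" by simp
  qed
next
  case (cancel x)
  then show ?case by (simp add: act_inv)
next
  case (rel r)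
  show ?case
  proof (intro allI impI)
    fix s :: st assume v: "vst (snd s)"
    obtain m p where s: "s = (m, p)" by (cases s)
    have vp: "vst p" using v s by simp
    from rel consider "r = [(Ga, False), (Gt, False), (Ga, True), (Gt, True)]"
      | i where "r = [(Gb i, True), (Gt, False), (Gb i, False), (Gt, True)] @ gpow Ga (- ns i)"
      unfolding relators_def by blast
    then show "acts ns s r = acts ns s []"
    proof cases
      case 1 then show ?thesis using rel1_acts[of ns m p] by (simp only: s acts_Nil)
    next
      case (2 i) then show ?thesis using rel2_acts[OF vp, of ns m i] by (simp only: s acts_Nil)
    qed
  qed
qed auto

lemma sound: "eqG k ns u v \<Longrightarrow> vst (snd s) \<Longrightarrow> acts ns s u = acts ns s v"
  using sound_aux by blast



definition sylw :: "int \<times> syl list \<Rightarrow> letter list" where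
  "sylw p = gpow Ga (fst p) @ concat (map (\<lambda>x. fst x # gpow Ga (snd x)) (snd p))"

definition nfw :: "st \<Rightarrow> letter list" where
  "nfw s = gpow Gt (fst s) @ sylw (snd s)"

lemma sylw_Nil[simp]: "sylw (c, []) = gpow Ga c" by (simp add: sylw_def)
lemma sylw_snoc: "sylw (c, r @ [y]) = sylw (c, r) @ fst y # gpow Ga (snd y)"
  by (simp add: sylw_def)
lemma sylw_Cons: "sylw (c0, y # r) = gpow Ga c0 @ fst y # sylw (snd y, r)"
  by (simp add: sylw_def)

declare eqG.trans[trans]

lemma E_app: "eqG k ns u u' \<Longrightarrow> eqG k ns v v' \<Longrightarrow> eqG k ns (u @ v) (u' @ v')"
proof -
  assume 1: "eqG k ns u u'" and 2: "eqG k ns v v'"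
  have "eqG k ns ([] @ u @ v) ([] @ u' @ v)" by (rule eqG.cong[OF 1])
  also have "eqG k ns ([] @ u' @ v) (u' @ v' @ [])" using eqG.cong[OF 2, of u' "[]"] by simp
  finally show ?thesis by simp
qed

lemma E_refl[simp, intro]: "eqG k ns u u" by (rule eqG.refl)

lemma E_sub: "eqG k ns u v \<Longrightarrow> eqG k ns (p @ u @ q) (p @ v @ q)" by (rule eqG.cong)

lemma E_cancel: "eqG k ns [x, inv_letter x] []" by (rule eqG.cancel)
lemma E_cancel': "eqG k ns [inv_letter x, x] []" using eqG.cancel[of k ns "inv_letter x"] by simp

lemma E_ins: "eqG k ns (p @ q) (p @ [x, inv_letter x] @ q)"
  using E_sub[OF E_cancel[of k ns x], where p=p and q=q] by (simp add: eqG.sym)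
lemma E_ins': "eqG k ns (p @ q) (p @ [inv_letter x, x] @ q)"
  using E_sub[OF E_cancel'[of k ns x], where p=p and q=q] by (simp add: eqG.sym)
lemma E_del: "eqG k ns (p @ [x, inv_letter x] @ q) (p @ q)"
  using E_sub[OF E_cancel[of k ns x], where p=p and q=q] by simp
lemma E_del': "eqG k ns (p @ [inv_letter x, x] @ q) (p @ q)"
  using E_sub[OF E_cancel'[of k ns x], where p=p and q=q] by simp

lemma inv_word_Cons: "inv_word (x # u) = inv_word u @ [inv_letter x]"
  by (simp add: inv_word_def)
lemma inv_word_Nil[simp]: "inv_word [] = []" by (simp add: inv_word_def)
lemma inv_word_inv[simp]: "inv_word (inv_word u) = u"
  by (simp add: inv_word_def rev_map comp_def)
lemma inv_word_append: "inv_word (u @ v) = inv_word v @ inv_word u"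
  by (simp add: inv_word_def)

lemma E_inv: "eqG k ns (u @ inv_word u) []"
proof (induction u)
  case (Cons x u)
  have "eqG k ns ([x] @ (u @ inv_word u) @ [inv_letter x]) ([x] @ [] @ [inv_letter x])"
    by (rule E_sub[OF Cons])
  then have "eqG k ns ((x # u) @ inv_word (x # u)) [x, inv_letter x]"
    by (simp add: inv_word_Cons)
  also have "eqG k ns [x, inv_letter x] []" by (rule E_cancel)
  finally show ?case .
qed simp

lemma E_inv': "eqG k ns (inv_word u @ u) []"
  using E_inv[of k ns "inv_word u"] by simp

lemma E_from_rel: "eqG k ns (u @ inv_word v) [] \<Longrightarrow> eqG k ns u v"
proof -
  assume h: "eqG k ns (u @ inv_word v) []"
  have "eqG k ns (u @ [] @ []) (u @ (inv_word v @ v) @ [])"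
    using E_sub[OF E_inv'[of k ns v], where p=u and q="[]"] by (simp add: eqG.sym)
  also have "eqG k ns (u @ (inv_word v @ v) @ []) ([] @ (u @ inv_word v) @ v)" by simp
  also have "eqG k ns ([] @ (u @ inv_word v) @ v) ([] @ [] @ v)" by (rule E_sub[OF h])
  finally show ?thesis by simp
qed

lemma E_rel: "r \<in> relators k ns \<Longrightarrow> eqG k ns r []" by (rule eqG.rel)

abbreviation "aF \<equiv> (Ga, False)"
abbreviation "aT \<equiv> (Ga, True)"
abbreviation "tF \<equiv> (Gt, False)"
abbreviation "tT \<equiv> (Gt, True)"

lemma invs[simp]: "inv_letter aF = aT" "inv_letter aT = aF" "inv_letter tF = tT" "inv_letter tT = tF"
  "inv_letter (Gb i, e) = (Gb i, \<not> e)"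
  by (simp_all add: inv_letter_def)

lemma R1: "eqG k ns [aF, tF] [tF, aF]"
  by (rule E_from_rel) (auto simp: inv_word_def relators_def intro: E_rel)

lemma R2: "eqG k ns [aT, tF] [tF, aT]"
proof -
  have "eqG k ns ([aT, tF] @ []) ([aT, tF] @ [aF, aT] @ [])" using E_ins[of k ns "[aT,tF]" "[]" aF] by simp
  also have "eqG k ns ([aT, tF] @ [aF, aT] @ []) ([aT] @ [tF, aF] @ [aT])" by simp
  also have "eqG k ns ([aT] @ [tF, aF] @ [aT]) ([aT] @ [aF, tF] @ [aT])" by (rule E_sub[OF eqG.sym[OF R1]])
  also have "eqG k ns ([aT] @ [aF, tF] @ [aT]) ([] @ [aT, aF] @ [tF, aT])" by simp
  also have "eqG k ns ([] @ [aT, aF] @ [tF, aT]) ([] @ [tF, aT])" using E_del'[of k ns "[]" aF "[tF, aT]"] by simp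
  finally show ?thesis by simp
qed

lemma R3: "eqG k ns [aF, tT] [tT, aF]"
proof -
  have "eqG k ns ([] @ [aF, tT]) ([] @ [tT, tF] @ [aF, tT])" using E_ins'[of k ns "[]" "[aF,tT]" tF] by simp
  also have "eqG k ns ([] @ [tT, tF] @ [aF, tT]) ([tT] @ [tF, aF] @ [tT])" by simp
  also have "eqG k ns ([tT] @ [tF, aF] @ [tT]) ([tT] @ [aF, tF] @ [tT])" by (rule E_sub[OF eqG.sym[OF R1]])
  also have "eqG k ns ([tT] @ [aF, tF] @ [tT]) ([tT, aF] @ [tF, tT] @ [])" by simp
  also have "eqG k ns ([tT, aF] @ [tF, tT] @ []) ([tT, aF] @ [])" using E_del[of k ns "[tT,aF]" tF "[]"] by simp
  finally show ?thesis by simp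
qed

lemma R4: "eqG k ns [aT, tT] [tT, aT]"
proof -
  have "eqG k ns ([] @ [aT, tT]) ([] @ [tT, tF] @ [aT, tT])" using E_ins'[of k ns "[]" "[aT,tT]" tF] by simp
  also have "eqG k ns ([] @ [tT, tF] @ [aT, tT]) ([tT] @ [tF, aT] @ [tT])" by simp
  also have "eqG k ns ([tT] @ [tF, aT] @ [tT]) ([tT] @ [aT, tF] @ [tT])" by (rule E_sub[OF eqG.sym[OF R2]])
  also have "eqG k ns ([tT] @ [aT, tF] @ [tT]) ([tT, aT] @ [tF, tT] @ [])" by simp
  also have "eqG k ns ([tT, aT] @ [tF, tT] @ []) ([tT, aT] @ [])" using E_del[of k ns "[tT,aT]" tF "[]"] by simp
  finally show ?thesis by simp
qed

lemma E_rep_comm: "eqG k ns [x, y] [y, x] \<Longrightarrow> eqG k ns (replicate n x @ [y]) (y # replicate n x)"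
proof (induction n)
  case (Suc n)
  have "eqG k ns ([x] @ (replicate n x @ [y]) @ []) ([x] @ (y # replicate n x) @ [])"
    by (rule E_sub[OF Suc.IH[OF Suc.prems]])
  also have "eqG k ns ([x] @ (y # replicate n x) @ []) ([] @ [x, y] @ replicate n x)" by simp
  also have "eqG k ns ([] @ [x, y] @ replicate n x) ([] @ [y, x] @ replicate n x)" by (rule E_sub[OF Suc.prems])
  finally show ?case by simp
qed simp

lemma C1: "eqG k ns (gpow Ga c @ [tF]) (tF # gpow Ga c)"
  by (simp add: gpow_def E_rep_comm R1 R2)
lemma C2: "eqG k ns (gpow Ga c @ [tT]) (tT # gpow Ga c)"
  by (simp add: gpow_def E_rep_comm R3 R4)

lemma gpow_0[simp]: "gpow g 0 = []" by (simp add: gpow_def)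
lemma gpow_snoc_pos: "0 \<le> y \<Longrightarrow> gpow g (y + 1) = gpow g y @ [(g, False)]"
  by (simp add: gpow_def nat_add_distrib replicate_append_same)
lemma gpow_snoc_neg: "y \<le> 0 \<Longrightarrow> gpow g (y - 1) = gpow g y @ [(g, True)]"
proof -
  assume "y \<le> 0"
  then have "nat (- (y - 1)) = Suc (nat (- y))" by simp
  then show ?thesis using \<open>y \<le> 0\<close> by (auto simp: gpow_def replicate_append_same)
qed

lemma inv_word_gpow: "inv_word (gpow g c) = gpow g (- c)"
  by (auto simp: gpow_def inv_word_def inv_letter_def)

lemma E_gpow_snocF: "eqG k ns (gpow g x @ [(g, False)]) (gpow g (x + 1))"
proof (cases "0 \<le> x")
  case True then show ?thesis by (simp add: gpow_snoc_pos)
next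
  case False
  then have "gpow g x = gpow g (x + 1) @ [(g, True)]" using gpow_snoc_neg[of "x+1" g] by simp
  then have "gpow g x @ [(g, False)] = gpow g (x + 1) @ [inv_letter (g, False), (g, False)] @ []"
    by (simp add: inv_letter_def)
  also have "eqG k ns \<dots> (gpow g (x + 1) @ [])" by (rule E_del')
  finally show ?thesis by simp
qed

lemma E_gpow_snocT: "eqG k ns (gpow g x @ [(g, True)]) (gpow g (x - 1))"
proof (cases "x \<le> 0")
  case True then show ?thesis by (simp add: gpow_snoc_neg)
next
  case False
  then have "gpow g x = gpow g (x - 1) @ [(g, False)]" using gpow_snoc_pos[of "x-1" g] by simp
  then have "gpow g x @ [(g, True)] = gpow g (x - 1) @ [(g, False), inv_letter (g, False)] @ []"
    by (simp add: inv_letter_def)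
  also have "eqG k ns \<dots> (gpow g (x - 1) @ [])" by (rule E_del)
  finally show ?thesis by simp
qed

lemma E_gpow_add: "eqG k ns (gpow g x @ gpow g y) (gpow g (x + y))"
proof (induction y rule: int_induct[where k = 0])
  case base then show ?case by simp
next
  case (step1 y)
  have "gpow g x @ gpow g (y + 1) = (gpow g x @ gpow g y) @ [(g, False)]" using step1 by (simp add: gpow_snoc_pos)
  also have "eqG k ns \<dots> (gpow g (x + y) @ [(g, False)])" using E_app[OF step1(2) E_refl] by simp
  also have "eqG k ns \<dots> (gpow g (x + y + 1))" by (rule E_gpow_snocF)
  finally show ?case by (simp add: algebra_simps)
next
  case (step2 y)
  have "gpow g x @ gpow g (y - 1) = (gpow g x @ gpow g y) @ [(g, True)]" using step2 by (simp add: gpow_snoc_neg)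
  also have "eqG k ns \<dots> (gpow g (x + y) @ [(g, True)])" using E_app[OF step2(2) E_refl] by simp
  also have "eqG k ns \<dots> (gpow g (x + y - 1))" by (rule E_gpow_snocT)
  finally show ?case by (simp add: algebra_simps)
qed


lemma rel_b: "1 \<le> i \<Longrightarrow> i \<le> k \<Longrightarrow> eqG k ns ([(Gb i, True), tF, (Gb i, False), tT] @ gpow Ga (- ns i)) []"
  by (rule E_rel) (auto simp: relators_def)

lemma B1:
  assumes i: "1 \<le> i" "i \<le> k"
  shows "eqG k ns [(Gb i, False), tF] (tF # (Gb i, False) # gpow Ga (- ns i))"
proof -
  let ?b = "(Gb i, False)" and ?bm = "(Gb i, True)" and ?A = "gpow Ga (- ns i)"
  have "eqG k ns ([?b] @ ([?bm, tF, ?b, tT] @ ?A) @ [?bm]) ([?b] @ [] @ [?bm])"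
    by (rule E_sub[OF rel_b[OF i]])
  also have "eqG k ns ([?b] @ [] @ [?bm]) []" using E_cancel[of k ns ?b] by simp
  finally have 1: "eqG k ns ([] @ [?b, ?bm] @ ([tF, ?b, tT] @ ?A @ [?bm])) []" by simp
  have "eqG k ns ([tF, ?b, tT] @ ?A @ [?bm]) ([] @ [?b, inv_letter ?b] @ ([tF, ?b, tT] @ ?A @ [?bm]))"
    using E_ins[of k ns "[]" "[tF, ?b, tT] @ ?A @ [?bm]" ?b] by simp
  also have "eqG k ns \<dots> []" using 1 by simp
  finally have "eqG k ns (([tF, ?b, tT] @ ?A) @ inv_word [?b]) []" by (simp add: inv_word_def)
  then have 2: "eqG k ns ([tF, ?b, tT] @ ?A) [?b]" by (rule E_from_rel)
  have "eqG k ns ([tF, ?b] @ (?A @ [tT]) @ []) ([tF, ?b] @ (tT # ?A) @ [])" by (rule E_sub[OF C2])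
  then have "eqG k ns ([tF, ?b] @ ?A @ [tT]) [?b]" using 2 by (simp add: eqG.trans)
  then have "eqG k ns (([tF, ?b] @ ?A @ [tT]) @ [tF]) ([?b] @ [tF])" using E_app by blast
  then have 3: "eqG k ns (([tF, ?b] @ ?A) @ [tT, tF] @ []) [?b, tF]" by simp
  have "eqG k ns (([tF, ?b] @ ?A) @ [tT, inv_letter tT] @ []) (([tF, ?b] @ ?A) @ [])" by (rule E_del)
  then have "eqG k ns ([tF, ?b] @ ?A) (([tF, ?b] @ ?A) @ [tT, tF] @ [])" by (simp add: eqG.sym)
  then have "eqG k ns ([tF, ?b] @ ?A) [?b, tF]" using 3 by (rule eqG.trans)
  then show ?thesis by (simp add: eqG.sym)
qed

lemma B2:
  assumes i: "1 \<le> i" "i \<le> k"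
  shows "eqG k ns [(Gb i, True), tF] (tF # gpow Ga (ns i) @ [(Gb i, True)])"
proof -
  let ?b = "(Gb i, False)" and ?bm = "(Gb i, True)" and ?A = "gpow Ga (- ns i)" and ?Ap = "gpow Ga (ns i)"
  have "eqG k ns ([] @ (tF # ?Ap @ [?bm])) ([] @ [inv_letter ?b, ?b] @ (tF # ?Ap @ [?bm]))" by (rule E_ins')
  also have "[] @ [inv_letter ?b, ?b] @ (tF # ?Ap @ [?bm]) = [?bm] @ [?b, tF] @ (?Ap @ [?bm])" by simp
  also have "eqG k ns \<dots> ([?bm] @ (tF # ?b # ?A) @ (?Ap @ [?bm]))" by (rule E_sub[OF B1[OF i]])
  also have "[?bm] @ (tF # ?b # ?A) @ (?Ap @ [?bm]) = [?bm, tF, ?b] @ (inv_word ?Ap @ ?Ap) @ [?bm]"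
    by (simp add: inv_word_gpow)
  also have "eqG k ns \<dots> ([?bm, tF, ?b] @ [] @ [?bm])" by (rule E_sub[OF E_inv'])
  also have "[?bm, tF, ?b] @ [] @ [?bm] = [?bm, tF] @ [?b, inv_letter ?b] @ []" by simp
  also have "eqG k ns \<dots> ([?bm, tF] @ [])" by (rule E_del)
  finally show ?thesis by (simp add: eqG.sym)
qed

definition okb :: "nat \<Rightarrow> letter \<Rightarrow> bool" where
  "okb k x \<longleftrightarrow> (\<exists>i. fst x = Gb i \<and> 1 \<le> i \<and> i \<le> k)"

lemma Lt:
  assumes "okb k s"
  shows "eqG k ns [s, tF] (tF # gpow Ga (negc ns (-1) s) @ [s] @ gpow Ga (own ns (-1) s))"
proof -
  obtain i e where s: "s = (Gb i, e)" and i: "1 \<le> i" "i \<le> k" using assms by (auto simp: okb_def) (metis prod.collapse)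
  show ?thesis
  proof (cases e)
    case True then show ?thesis using B2[OF i, of ns] by (simp add: s negc_def own_def)
  next
    case False then show ?thesis using B1[OF i, of ns] by (simp add: s negc_def own_def)
  qed
qed

lemma P_t:
  assumes "\<forall>x\<in>set r. okb k (fst x)"
  shows "eqG k ns (sylw (c0, r) @ [tF]) (tF # sylw (twist ns (-1) (c0, r)))"
  using assms
proof (induction r arbitrary: c0)
  case Nil
  then show ?case by (simp add: twist_def C1)
next
  case (Cons y r)
  obtain s c where y: "y = (s, c)" by (cases y)
  have ok: "okb k s" using Cons.prems y by simp
  let ?T = "concat (map (\<lambda>x. fst x # gpow Ga (snd x)) (twn ns (-1) 0 r))"
  let ?G1 = "gpow Ga (negc ns (-1) s)" and ?G2 = "gpow Ga (own ns (-1) s)"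
  have IH: "eqG k ns (sylw (c, r) @ [tF]) (tF # gpow Ga (c + hnx ns (-1) 0 r) @ ?T)"
    using Cons.IH[of c] Cons.prems by (simp add: twist_def sylw_def)
  have "sylw (c0, y # r) @ [tF] = (gpow Ga c0 @ [s]) @ (sylw (c, r) @ [tF]) @ []"
    by (simp add: sylw_Cons y)
  also have "eqG k ns \<dots> ((gpow Ga c0 @ [s]) @ (tF # gpow Ga (c + hnx ns (-1) 0 r) @ ?T) @ [])"
    by (rule E_sub[OF IH])
  also have "\<dots> = gpow Ga c0 @ [s, tF] @ (gpow Ga (c + hnx ns (-1) 0 r) @ ?T)" by simp
  also have "eqG k ns \<dots> (gpow Ga c0 @ (tF # ?G1 @ [s] @ ?G2) @ (gpow Ga (c + hnx ns (-1) 0 r) @ ?T))"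
    by (rule E_sub[OF Lt[OF ok]])
  also have "\<dots> = [] @ (gpow Ga c0 @ [tF]) @ (?G1 @ [s] @ ?G2 @ gpow Ga (c + hnx ns (-1) 0 r) @ ?T)" by simp
  also have "eqG k ns \<dots> ([] @ (tF # gpow Ga c0) @ (?G1 @ [s] @ ?G2 @ gpow Ga (c + hnx ns (-1) 0 r) @ ?T))"
    by (rule E_sub[OF C1])
  also have "\<dots> = [tF] @ (gpow Ga c0 @ ?G1) @ ([s] @ ?G2 @ gpow Ga (c + hnx ns (-1) 0 r) @ ?T)" by simp
  also have "eqG k ns \<dots> ([tF] @ gpow Ga (c0 + negc ns (-1) s) @ ([s] @ ?G2 @ gpow Ga (c + hnx ns (-1) 0 r) @ ?T))"
    by (rule E_sub[OF E_gpow_add])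
  also have "\<dots> = (tF # gpow Ga (c0 + negc ns (-1) s) @ [s]) @ (?G2 @ gpow Ga (c + hnx ns (-1) 0 r)) @ ?T" by simp
  also have "eqG k ns \<dots> ((tF # gpow Ga (c0 + negc ns (-1) s) @ [s]) @ gpow Ga (own ns (-1) s + (c + hnx ns (-1) 0 r)) @ ?T)"
    by (rule E_sub[OF E_gpow_add])
  also have "\<dots> = tF # sylw (twist ns (-1) (c0, y # r))"
    by (simp add: twist_def sylw_def y hnx_def algebra_simps)
  finally show ?case .
qed


definition okst :: "nat \<Rightarrow> int \<times> syl list \<Rightarrow> bool" where
  "okst k p \<longleftrightarrow> (\<forall>x\<in>set (snd p). okb k (fst x))"

lemma alphabet_iff: "x \<in> alphabet k \<longleftrightarrow> fst x = Ga \<or> fst x = Gt \<or> (\<exists>i. fst x = Gb i \<and> 1 \<le> i \<and> i \<le> k)"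
  by (cases x) (auto simp: alphabet_def gens_def)

lemma okb_twn: "\<forall>x\<in>set r. okb k (fst x) \<Longrightarrow> \<forall>x\<in>set (twn ns d e r). okb k (fst x)"
  by (induction r) auto

lemma okst_twist: "okst k p \<Longrightarrow> okst k (twist ns d p)"
  unfolding okst_def twist_def using okb_twn by simp

lemma okst_addl: "okst k p \<Longrightarrow> okst k (addl c p)"
  unfolding okst_def addl_def addlast_def by (auto dest: in_set_butlastD)

lemma okst_act: "okst k p \<Longrightarrow> x \<in> alphabet k \<Longrightarrow> okst k (snd (act ns (m, p) x))"
proof -
  assume ok: "okst k p" and x: "x \<in> alphabet k"
  obtain g e where xe: "x = (g, e)" by (cases x)
  show ?thesis
  proof (cases g)
    case Ga then show ?thesis using ok by (simp add: xe okst_addl)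
  next
    case Gt then show ?thesis using ok by (simp add: xe okst_twist)
  next
    case (Gb i)
    then have "okb k (Gb i, e)" using x by (auto simp: xe alphabet_iff okb_def)
    then show ?thesis using ok Gb by (auto simp: xe pushb_def okst_def dest: in_set_butlastD)
  qed
qed

lemma P_tT:
  assumes "okst k p"
  shows "eqG k ns (sylw p @ [tT]) (tT # sylw (twist ns 1 p))"
proof -
  obtain c r where p1: "twist ns 1 p = (c, r)" by (cases "twist ns 1 p")
  have okr: "\<forall>x\<in>set r. okb k (fst x)" using okst_twist[OF assms, of ns 1] p1 by (simp add: okst_def)
  have bk: "twist ns (-1) (c, r) = p" using twist_twist[of ns "-1" 1 p] p1 by simp
  have P: "eqG k ns (sylw (c, r) @ [tF]) (tF # sylw p)" using P_t[OF okr, of ns c] bk by simp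
  have "eqG k ns ([] @ (sylw p @ [tT])) ([] @ [inv_letter tF, tF] @ (sylw p @ [tT]))" by (rule E_ins')
  also have "\<dots> = [tT] @ (tF # sylw p) @ [tT]" by simp
  also have "eqG k ns \<dots> ([tT] @ (sylw (c, r) @ [tF]) @ [tT])" by (rule E_sub[OF eqG.sym[OF P]])
  also have "\<dots> = (tT # sylw (c, r)) @ [tF, inv_letter tF] @ []" by simp
  also have "eqG k ns \<dots> ((tT # sylw (c, r)) @ [])" by (rule E_del)
  finally show ?thesis using p1 by simp
qed

lemma nfw_simp: "nfw (m, p) = gpow Gt m @ sylw p" by (simp add: nfw_def)

lemma step_comp:
  assumes v: "vst p" and ok: "okst k p" and x: "x \<in> alphabet k"
  shows "eqG k ns (nfw (m, p) @ [x]) (nfw (act ns (m, p) x))"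
proof -
  obtain g e where xe: "x = (g, e)" by (cases x)
  obtain c0 r where p: "p = (c0, r)" by (cases p)
  show ?thesis
  proof (cases g)
    case Ga
    let ?d = "if e then -1 else (1::int)"
    have ge: "eqG k ns (gpow Ga c @ [x]) (gpow Ga (c + ?d))" for c
      using E_gpow_snocF[of k ns Ga c] E_gpow_snocT[of k ns Ga c] by (cases e) (auto simp: xe Ga)
    show ?thesis
    proof (cases "r = []")
      case True
      have "nfw (m, p) @ [x] = gpow Gt m @ (gpow Ga c0 @ [x]) @ []" by (simp add: nfw_simp p True)
      also have "eqG k ns \<dots> (gpow Gt m @ gpow Ga (c0 + ?d) @ [])" by (rule E_sub[OF ge])
      finally show ?thesis by (simp add: xe Ga nfw_simp p True addl_def)
    next
      case False
      then obtain r0 y where r: "r = r0 @ [y]" by (metis append_butlast_last_id)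
      have "nfw (m, p) @ [x] = (gpow Gt m @ sylw (c0, r0) @ [fst y]) @ (gpow Ga (snd y) @ [x]) @ []"
        by (simp add: nfw_simp p r sylw_snoc)
      also have "eqG k ns \<dots> ((gpow Gt m @ sylw (c0, r0) @ [fst y]) @ gpow Ga (snd y + ?d) @ [])" by (rule E_sub[OF ge])
      finally show ?thesis by (simp add: xe Ga nfw_simp p r addl_def addlast_def sylw_snoc)
    qed
  next
    case Gt
    show ?thesis
    proof (cases e)
      case False
      have "nfw (m, p) @ [x] = gpow Gt m @ (sylw p @ [tF]) @ []" by (simp add: nfw_simp xe Gt False)
      also have "eqG k ns \<dots> (gpow Gt m @ (tF # sylw (twist ns (-1) p)) @ [])"
        by (rule E_sub) (use P_t[of r k ns c0] ok in \<open>simp add: okst_def p\<close>)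
      also have "\<dots> = [] @ (gpow Gt m @ [tF]) @ sylw (twist ns (-1) p)" by simp
      also have "eqG k ns \<dots> ([] @ gpow Gt (m + 1) @ sylw (twist ns (-1) p))" by (rule E_sub[OF E_gpow_snocF])
      finally show ?thesis by (simp add: xe Gt False nfw_simp)
    next
      case True
      have "nfw (m, p) @ [x] = gpow Gt m @ (sylw p @ [tT]) @ []" by (simp add: nfw_simp xe Gt True)
      also have "eqG k ns \<dots> (gpow Gt m @ (tT # sylw (twist ns 1 p)) @ [])"
        by (rule E_sub[OF P_tT[OF ok]])
      also have "\<dots> = [] @ (gpow Gt m @ [tT]) @ sylw (twist ns 1 p)" by simp
      also have "eqG k ns \<dots> ([] @ gpow Gt (m - 1) @ sylw (twist ns 1 p))" by (rule E_sub[OF E_gpow_snocT])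
      finally show ?thesis by (simp add: xe Gt True nfw_simp)
    qed
  next
    case (Gb i)
    show ?thesis
    proof (cases "r \<noteq> [] \<and> last r = (inv_letter x, 0)")
      case True
      then obtain r0 where r: "r = r0 @ [(inv_letter x, 0)]" by (metis append_butlast_last_id)
      have "nfw (m, p) @ [x] = nfw (m, (c0, r0)) @ [inv_letter x, x] @ []"
        by (simp add: nfw_simp p r sylw_snoc)
      also have "eqG k ns \<dots> (nfw (m, (c0, r0)) @ [])" by (rule E_del')
      finally show ?thesis using True by (simp add: xe Gb p r pushb_def)
    next
      case False
      have pb: "pushb x (c0, r) = (c0, r @ [(x, 0)])" unfolding pushb_def fst_conv snd_conv
        by (rule if_not_P[OF False])
      have "act ns (m, p) x = (m, pushb x (c0, r))" by (simp add: xe Gb p)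
      then have "act ns (m, p) x = (m, (c0, r @ [(x, 0)]))" using pb by simp
      then show ?thesis by (simp add: nfw_simp p sylw_snoc)
    qed
  qed
qed

lemma completeness_aux:
  "v \<in> lists (alphabet k) \<Longrightarrow> eqG k ns v (nfw (acts ns (0, 0, []) v)) \<and> vst (snd (acts ns (0, 0, []) v))
     \<and> okst k (snd (acts ns (0, 0, []) v))"
proof (induction v rule: rev_induct)
  case Nil then show ?case by (simp add: nfw_def vst_def okst_def)
next
  case (snoc x v)
  let ?s = "acts ns (0, 0, []) v"
  from snoc have IH: "eqG k ns v (nfw ?s)" "vst (snd ?s)" "okst k (snd ?s)" and x: "x \<in> alphabet k" by auto
  obtain m p where s: "?s = (m, p)" by (cases ?s)
  have "eqG k ns (v @ [x]) (nfw ?s @ [x])" using E_app[OF IH(1) E_refl] .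
  also have "eqG k ns (nfw ?s @ [x]) (nfw (act ns ?s x))" using step_comp IH x s by simp
  finally show ?case using IH x s vst_act[of "(m, p)" ns x] okst_act[of k p x ns m] by simp
qed

lemma completeness: "v \<in> lists (alphabet k) \<Longrightarrow> eqG k ns v (nfw (acts ns (0, 0, []) v))"
  using completeness_aux by blast

lemma twist_empty[simp]: "twist ns d (0, []) = (0, [])" by (simp add: twist_def)

lemma acts_rep_t: "acts ns (j, (0, [])) (replicate n (Gt, e)) = (j + (if e then - int n else int n), (0, []))"
  by (induction n arbitrary: j) (auto simp: algebra_simps)

lemma acts_gpow_t: "acts ns (j, (0, [])) (gpow Gt m) = (j + m, (0, []))"
  by (cases "0 \<le> m") (auto simp: gpow_def acts_rep_t)

lemma acts_syls: "vst (c0, r) \<Longrightarrow> acts ns (m, (c0, [])) (concat (map (\<lambda>x. fst x # gpow Ga (snd x)) r)) = (m, (c0, r))"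
proof (induction r rule: rev_induct)
  case Nil then show ?case by simp
next
  case (snoc y r)
  have v: "vst (c0, r)" using snoc.prems by (simp add: vst_def noc_snoc)
  obtain i e where yi: "fst y = (Gb i, e)" using snoc.prems
    by (cases "fst y"; cases "fst (fst y)") (auto simp: vst_def)
  have nl: "\<not> (r \<noteq> [] \<and> last r = (inv_letter (fst y), 0))"
    using snoc.prems by (auto simp: vst_def noc_snoc)
  have pb: "pushb (fst y) (c0, r) = (c0, r @ [(fst y, 0)])" unfolding pushb_def fst_conv snd_conv
    by (rule if_not_P[OF nl])
  have "act ns (m, (c0, r)) (fst y) = (m, pushb (fst y) (c0, r))" by (simp add: yi)
  then have "act ns (m, (c0, r)) (fst y) = (m, (c0, r @ [(fst y, 0)]))" using pb by simp
  then show ?case using snoc.IH[OF v] by (simp add: acts_gpow_a addl_def addlast_def yi) (metis prod.collapse yi)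
qed

lemma acts_nfw: "vst p \<Longrightarrow> acts ns (0, 0, []) (nfw (m, p)) = (m, p)"
proof -
  assume v: "vst p"
  obtain c0 r where p: "p = (c0, r)" by (cases p)
  have "acts ns (0, 0, []) (gpow Gt m) = (m, (0, []))" using acts_gpow_t[of ns 0 m] by simp
  moreover have "acts ns (m, (0, [])) (gpow Ga c0) = (m, (c0, []))" by (simp add: acts_gpow_a addl_def)
  ultimately show ?thesis using acts_syls[of c0 r ns m] v by (simp add: nfw_def sylw_def p)
qed



definition cond :: "letter \<Rightarrow> letter \<Rightarrow> bool" where
  "cond y x \<longleftrightarrow> (if fst x = Gt then y = x else x \<noteq> inv_letter y)"

fun condo :: "letter option \<Rightarrow> letter \<Rightarrow> bool" where
  "condo None x = True" | "condo (Some y) x = cond y x"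

definition lastopt :: "letter list \<Rightarrow> letter option" where
  "lastopt w = (if w = [] then None else Some (last w))"

definition lastof :: "st \<Rightarrow> letter option" where
  "lastof s = (let m = fst s; c0 = fst (snd s); r = snd (snd s) in
     if r \<noteq> [] then (if snd (last r) > 0 then Some aF else if snd (last r) < 0 then Some aT else Some (fst (last r)))
     else if c0 > 0 then Some aF else if c0 < 0 then Some aT
     else if m > 0 then Some tF else if m < 0 then Some tT else None)"

lemma lastopt_append: "lastopt (A @ B) = (if B = [] then lastopt A else lastopt B)"
  by (simp add: lastopt_def)
lemma lastopt_gpow: "lastopt (gpow g c) = (if c = 0 then None else Some (g, c < 0))"
  by (auto simp: lastopt_def gpow_def)
lemma gpow_Nil_iff[simp]: "gpow g c = [] \<longleftrightarrow> c = 0"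
  by (auto simp: gpow_def)

lemma last_gpow: "c \<noteq> 0 \<Longrightarrow> last (gpow g c) = (g, c < 0)"
  by (auto simp: gpow_def)

lemma last_nfw: "lastopt (nfw (m, c0, r)) = lastof (m, c0, r)"
proof (cases "r = []")
  case True
  then show ?thesis by (auto simp: nfw_def lastopt_append lastopt_gpow lastof_def)
next
  case False
  then obtain r0 y where r: "r = r0 @ [y]" by (metis append_butlast_last_id)
  show ?thesis by (auto simp: nfw_def r sylw_snoc lastopt_append lastopt_gpow lastof_def Let_def last_gpow)
       (auto simp: lastopt_def gpow_def)
qed

lemma isb_not_t: "isb x \<Longrightarrow> fst x \<noteq> Gt \<and> fst x \<noteq> Ga"
  by (cases x; cases "fst x") auto

lemma step_fwd:
  assumes v: "vst p" and x: "x \<in> alphabet k" and c: "condo (lastof (m, p)) x"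
  shows "nfw (act ns (m, p) x) = nfw (m, p) @ [x]"
proof -
  obtain g e where xe: "x = (g, e)" by (cases x)
  obtain c0 r where p: "p = (c0, r)" by (cases p)
  have lastb: "r \<noteq> [] \<Longrightarrow> isb (fst (last r))" using v by (simp add: vst_def p)
  show ?thesis
  proof (cases g)
    case Gt
    have rn: "r = []"
    proof (rule ccontr)
      assume "r \<noteq> []"
      then show False using c lastb[OF \<open>r \<noteq> []\<close>] isb_not_t[of "fst (last r)"]
        by (auto simp: lastof_def Let_def p xe Gt cond_def split: if_splits)
    qed
    have c00: "c0 = 0" using c rn by (auto simp: lastof_def Let_def p xe Gt cond_def split: if_splits)
    show ?thesis
    proof (cases e)
      case True
      then have "m \<le> 0" using c rn c00 by (auto simp: lastof_def Let_def p xe Gt cond_def split: if_splits)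
      then show ?thesis using True rn c00 by (simp add: p xe Gt nfw_def gpow_snoc_neg)
    next
      case False
      then have "m \<ge> 0" using c rn c00 by (auto simp: lastof_def Let_def p xe Gt cond_def split: if_splits)
      then show ?thesis using False rn c00 by (simp add: p xe Gt nfw_def gpow_snoc_pos)
    qed
  next
    case Ga
    show ?thesis
    proof (cases "r = []")
      case True
      show ?thesis
      proof (cases e)
        case e: True
        then have "c0 \<le> 0" using c True by (auto simp: lastof_def Let_def p xe Ga cond_def inv_letter_def split: if_splits)
        then show ?thesis using e True by (simp add: p xe Ga nfw_def addl_def gpow_snoc_neg)
      next
        case e: False
        then have "c0 \<ge> 0" using c True by (auto simp: lastof_def Let_def p xe Ga cond_def inv_letter_def split: if_splits)
        then show ?thesis using e True by (simp add: p xe Ga nfw_def addl_def gpow_snoc_pos)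
      qed
    next
      case False
      then obtain r0 y where r: "r = r0 @ [y]" by (metis append_butlast_last_id)
      have ib: "isb (fst y)" using lastb False r by simp
      show ?thesis
      proof (cases e)
        case e: True
        then have "snd y \<le> 0" using c ib isb_not_t[of "fst y"]
          by (auto simp: lastof_def Let_def p r xe Ga cond_def inv_letter_def split: if_splits)
        then show ?thesis using e by (simp add: p r xe Ga nfw_def addl_def addlast_def sylw_snoc gpow_snoc_neg)
      next
        case e: False
        then have "snd y \<ge> 0" using c ib isb_not_t[of "fst y"]
          by (auto simp: lastof_def Let_def p r xe Ga cond_def inv_letter_def split: if_splits)
        then show ?thesis using e by (simp add: p r xe Ga nfw_def addl_def addlast_def sylw_snoc gpow_snoc_pos)
      qed
    qed
  next
    case (Gb i)
    have nl: "\<not> (r \<noteq> [] \<and> last r = (inv_letter x, 0))"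
    proof
      assume a: "r \<noteq> [] \<and> last r = (inv_letter x, 0)"
      then have "lastof (m, p) = Some (inv_letter x)" by (simp add: lastof_def Let_def p)
      then show False using c by (simp add: cond_def xe Gb)
    qed
    have pb: "pushb x (c0, r) = (c0, r @ [(x, 0)])" unfolding pushb_def fst_conv snd_conv
      by (rule if_not_P[OF nl])
    have "act ns (m, p) x = (m, pushb x (c0, r))" by (simp add: xe Gb p)
    then show ?thesis using pb by (simp add: nfw_def p sylw_snoc)
  qed
qed


fun gi :: "gen \<Rightarrow> nat" where "gi Ga = 0" | "gi Gt = 1" | "gi (Gb i) = i + 2"
fun ig :: "nat \<Rightarrow> gen" where "ig 0 = Ga" | "ig (Suc 0) = Gt" | "ig (Suc (Suc i)) = Gb i"

definition code :: "letter \<Rightarrow> nat" where "code x = 2 * gi (fst x) + (if snd x then 1 else 0)"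
definition decode :: "nat \<Rightarrow> letter" where "decode c = (ig (c div 2), odd c)"

lemma ig_gi[simp]: "ig (gi g) = g" by (cases g) (auto simp: numeral_2_eq_2)

lemma decode_code[simp]: "decode (code x) = x"
  by (cases x) (auto simp: code_def decode_def)

definition dfa_d :: "nat \<Rightarrow> letter \<Rightarrow> nat" where
  "dfa_d q x = (if q = 1 then 1 else if condo (if q = 0 then None else Some (decode (q - 2))) x then code x + 2 else 1)"

definition encq :: "letter option \<Rightarrow> nat" where
  "encq ov = (case ov of None \<Rightarrow> 0 | Some y \<Rightarrow> code y + 2)"

definition acc :: "letter list \<Rightarrow> bool" where "acc w \<longleftrightarrow> foldl dfa_d 0 w \<noteq> 1"

lemma dfa_encq: "dfa_d (encq ov) x = (if condo ov x then code x + 2 else 1)"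
  by (cases ov) (auto simp: dfa_d_def encq_def)

lemma fold1: "foldl dfa_d 1 w = 1"
  by (induction w) (auto simp: dfa_d_def)

lemma acc_enc: "acc w \<Longrightarrow> foldl dfa_d 0 w = encq (lastopt w)"
proof (induction w rule: rev_induct)
  case Nil then show ?case by (simp add: encq_def lastopt_def)
next
  case (snoc x w)
  have a: "acc w"
  proof (rule ccontr)
    assume "\<not> acc w"
    then have "foldl dfa_d 0 (w @ [x]) = 1" by (simp add: acc_def dfa_d_def)
    then show False using snoc.prems by (simp add: acc_def)
  qed
  then have f: "foldl dfa_d 0 w = encq (lastopt w)" by (rule snoc.IH)
  show ?case using snoc.prems f dfa_encq[of "lastopt w" x]
    by (auto simp: acc_def encq_def lastopt_def split: if_splits)
qed

lemma acc_snoc: "acc (w @ [x]) \<longleftrightarrow> acc w \<and> condo (lastopt w) x"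
proof (cases "acc w")
  case True
  then have f: "foldl dfa_d 0 w = encq (lastopt w)" by (rule acc_enc)
  show ?thesis using f True dfa_encq[of "lastopt w" x] by (simp add: acc_def)
next
  case False
  then show ?thesis by (auto simp: acc_def dfa_d_def fold1)
qed

lemma cond_self: "cond x x" by (cases x) (auto simp: cond_def inv_letter_def)

lemma acc_rep: "acc W \<Longrightarrow> condo (lastopt W) x \<Longrightarrow> acc (W @ replicate n x)"
proof (induction n)
  case (Suc n)
  have "W @ replicate (Suc n) x = (W @ replicate n x) @ [x]" by (simp add: replicate_append_same)
  moreover have "condo (lastopt (W @ replicate n x)) x" using Suc.prems
    by (cases n) (auto simp: lastopt_append cond_self lastopt_def)
  ultimately show ?case using Suc acc_snoc[of "W @ replicate n x" x] by simp
qed simp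

lemma acc_gpow: "acc W \<Longrightarrow> (c \<noteq> 0 \<Longrightarrow> condo (lastopt W) (g, c < 0)) \<Longrightarrow> acc (W @ gpow g c)"
  by (cases "c = 0") (auto simp: gpow_def intro: acc_rep)

lemma acc_Nil: "acc []" by (simp add: acc_def)

lemma acc_nfw: "vst (c0, r) \<Longrightarrow> acc (nfw (m, c0, r))"
proof (induction r rule: rev_induct)
  case Nil
  have 1: "acc (gpow Gt m)" using acc_gpow[OF acc_Nil, of m Gt] by (simp add: lastopt_def)
  have "acc (gpow Gt m @ gpow Ga c0)"
    by (rule acc_gpow[OF 1]) (auto simp: lastopt_gpow cond_def inv_letter_def)
  then show ?case by (simp add: nfw_def)
next
  case (snoc y r)
  have v: "vst (c0, r)" using snoc.prems by (simp add: vst_def noc_snoc)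
  have ib: "isb (fst y)" using snoc.prems by (simp add: vst_def)
  have nz: "r \<noteq> [] \<longrightarrow> fst y = inv_letter (fst (last r)) \<longrightarrow> snd (last r) \<noteq> 0"
    using snoc.prems by (simp add: vst_def noc_snoc)
  have c1: "condo (lastof (m, c0, r)) (fst y)"
    using ib isb_not_t[of "fst y"] nz
    by (auto simp: lastof_def Let_def cond_def inv_letter_def)
  have a1: "acc (nfw (m, c0, r) @ [fst y])"
    using snoc.IH[OF v] c1 last_nfw[of m c0 r] by (simp add: acc_snoc)
  have "acc ((nfw (m, c0, r) @ [fst y]) @ gpow Ga (snd y))"
    by (rule acc_gpow[OF a1]) (use ib isb_not_t[of "fst y"] in \<open>auto simp: lastopt_def cond_def inv_letter_def\<close>)
  then show ?case by (simp add: nfw_def sylw_snoc)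
qed

lemma acc_nf:
  "w \<in> lists (alphabet k) \<Longrightarrow> acc w \<Longrightarrow> w = nfw (acts ns (0, 0, []) w)"
proof (induction w rule: rev_induct)
  case Nil then show ?case by (simp add: nfw_def)
next
  case (snoc x w)
  let ?s = "acts ns (0, 0, []) w"
  have aw: "acc w" and cw: "condo (lastopt w) x" using snoc.prems by (auto simp: acc_snoc)
  have wl: "w \<in> lists (alphabet k)" and x: "x \<in> alphabet k" using snoc.prems by auto
  have e: "w = nfw ?s" using snoc.IH[OF wl aw] .
  obtain m p where s: "?s = (m, p)" by (cases ?s)
  obtain c0 r where p: "p = (c0, r)" by (cases p)
  have v: "vst p" using completeness_aux[OF wl, of ns] s by simp
  have "lastopt w = lastof (m, p)" using e s p last_nfw[of m c0 r] by simp
  then have c: "condo (lastof (m, p)) x" using cw by simp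
  have "nfw (act ns (m, p) x) = nfw (m, p) @ [x]" by (rule step_fwd[OF v x c])
  then show ?case using e s by simp
qed


lemma proper_real:
  fixes f :: "real \<Rightarrow> real"
  assumes cont: "continuous_on {0..} f" and img: "f ` {0..} \<subseteq> {0..}"
    and grow: "\<And>s. s \<ge> 0 \<Longrightarrow> f s \<ge> s - T"
  shows "proper_map (top_of_set {0..}) (top_of_set {0..}) f"
proof (rule compact_imp_proper_map)
  show "k_space (top_of_set {0::real..})"
    by (simp add: metrizable_imp_k_space metrizable_space_subtopology metrizable_space_euclidean)
  show "kc_space (top_of_set {0::real..})"
    by (simp add: kc_space_subtopology kc_space_euclidean)
  show "f \<in> topspace (top_of_set {0..}) \<rightarrow> topspace (top_of_set {0..})"
    using img by auto
  show "continuous_map (top_of_set {0..}) (top_of_set {0..}) f \<or> kc_space (top_of_set {0::real..})"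
    by (simp add: kc_space_subtopology kc_space_euclidean)
  fix K :: "real set" assume K: "compactin (top_of_set {0..}) K"
  then have cK: "compact K" and Ks: "K \<subseteq> {0..}" by (auto simp: compactin_subtopology compactin_euclidean_iff)
  then obtain B0 where "\<forall>x\<in>K. \<bar>x\<bar> \<le> B0" using compact_imp_bounded bounded_real by metis
  then have B: "\<And>x. x \<in> K \<Longrightarrow> x \<le> B0" by (meson abs_le_D1)
  define B where "B = B0"
  note B = B[folded B_def]
  let ?A = "{x \<in> topspace (top_of_set {0..}). f x \<in> K}"
  have A: "?A = {0..} \<inter> f -` K" by auto
  have "closed ?A"
    unfolding A using continuous_closed_preimage[OF cont closed_atLeast] compact_imp_closed[OF cK]
    by (metis closed_vimage_Int continuous_on_closed_vimage cont)
  moreover have "bounded ?A"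
  proof -
    have "?A \<subseteq> {0..B+T}" using B grow by (force)
    then show ?thesis by (meson bounded_closed_interval bounded_subset)
  qed
  ultimately show "compactin (top_of_set {0..}) ?A"
    by (auto simp: compactin_subtopology compactin_euclidean_iff compact_eq_bounded_closed)
qed



lemma inv_letter_alph: "x \<in> alphabet k \<Longrightarrow> inv_letter x \<in> alphabet k"
  by (cases x) (auto simp: alphabet_def inv_letter_def)

lemma inv_word_alph: "u \<in> lists (alphabet k) \<Longrightarrow> inv_word u \<in> lists (alphabet k)"
  by (auto simp: inv_word_def inv_letter_alph)

lemma dword_le: "z \<in> lists (alphabet k) \<Longrightarrow> eqG k ns (P @ z) Q \<Longrightarrow> dword k ns P Q \<le> real (length z)"
  unfolding dword_def by (rule of_nat_mono, rule Least_le) blast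

lemma dword_nonneg: "0 \<le> dword k ns P Q" by (simp add: dword_def)

lemma dword_ex: "P \<in> lists (alphabet k) \<Longrightarrow> Q \<in> lists (alphabet k) \<Longrightarrow>
   \<exists>z \<in> lists (alphabet k). real (length z) = dword k ns P Q \<and> eqG k ns (P @ z) Q"
proof -
  assume P: "P \<in> lists (alphabet k)" and Q: "Q \<in> lists (alphabet k)"
  let ?z = "inv_word P @ Q"
  have "eqG k ns ([] @ (P @ inv_word P) @ Q) ([] @ [] @ Q)" by (rule E_sub[OF E_inv])
  then have e: "eqG k ns (P @ ?z) Q" by simp
  have z: "?z \<in> lists (alphabet k)" using P Q inv_word_alph by auto
  have "\<exists>n. \<exists>z\<in>lists (alphabet k). length z = n \<and> eqG k ns (P @ z) Q" using e z by blast
  from LeastI_ex[OF this] show ?thesis unfolding dword_def by auto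
qed

lemma dword_tri:
  assumes "P \<in> lists (alphabet k)" "Q \<in> lists (alphabet k)" "R \<in> lists (alphabet k)"
  shows "dword k ns P R \<le> dword k ns P Q + dword k ns Q R"
proof -
  obtain z1 where z1: "z1 \<in> lists (alphabet k)" "real (length z1) = dword k ns P Q" "eqG k ns (P @ z1) Q"
    using dword_ex[OF assms(1,2)] by blast
  obtain z2 where z2: "z2 \<in> lists (alphabet k)" "real (length z2) = dword k ns Q R" "eqG k ns (Q @ z2) R"
    using dword_ex[OF assms(2,3)] by blast
  have "eqG k ns ((P @ z1) @ z2) (Q @ z2)" by (rule E_app[OF z1(3) E_refl])
  then have "eqG k ns (P @ (z1 @ z2)) R" using z2(3) by (simp add: eqG.trans)
  then have "dword k ns P R \<le> real (length (z1 @ z2))" by (rule dword_le[rotated]) (use z1 z2 in auto)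
  then show ?thesis using z1 z2 by simp
qed

lemma dword_app: "d \<in> lists (alphabet k) \<Longrightarrow> dword k ns P (P @ d) \<le> real (length d)"
  by (rule dword_le) auto

lemma dword_app': "d \<in> lists (alphabet k) \<Longrightarrow> dword k ns (P @ d) P \<le> real (length d)"
proof -
  assume d: "d \<in> lists (alphabet k)"
  have "eqG k ns (P @ (d @ inv_word d) @ []) (P @ [] @ [])" by (rule E_sub[OF E_inv])
  then have "eqG k ns ((P @ d) @ inv_word d) P" by simp
  then have "dword k ns (P @ d) P \<le> real (length (inv_word d))" by (rule dword_le[rotated]) (use d inv_word_alph in auto)
  then show ?thesis by (simp add: inv_word_def)
qed

lemma dword_eq0: "dword k ns P P = 0"
  using dword_le[of "[]" k ns P P] dword_nonneg[of k ns P P] by simp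

lemma dword_ev:
  assumes "P \<in> lists (alphabet k)" "Q \<in> lists (alphabet k)" "z \<in> lists (alphabet k)"
    and "acts ns (0, 0, []) (P @ z) = acts ns (0, 0, []) Q"
  shows "dword k ns P Q \<le> real (length z)"
proof -
  have 1: "eqG k ns (P @ z) (nfw (acts ns (0, 0, []) (P @ z)))" using assms by (intro completeness) auto
  have 2: "eqG k ns Q (nfw (acts ns (0, 0, []) Q))" using assms by (intro completeness) auto
  have "eqG k ns (P @ z) Q" using 1 2 assms(4) by (metis eqG.sym eqG.trans)
  then show ?thesis by (rule dword_le[rotated]) (use assms in auto)
qed

lemma cdist_le: "cdist k ns (h, a, \<theta>) (h', a', \<eta>) \<le> \<theta> + dword k ns h h' + \<eta>"
  unfolding cdist_def Let_def by (auto intro: min.coboundedI1)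

lemma take_alph: "w \<in> lists (alphabet k) \<Longrightarrow> take j w \<in> lists (alphabet k)"
  by (meson in_lists_conv_set in_set_takeD)

lemma dword_take_le: "w \<in> lists (alphabet k) \<Longrightarrow> i \<le> j \<Longrightarrow> dword k ns (take i w) (take j w) \<le> real (j - i)"
proof -
  assume w: "w \<in> lists (alphabet k)" and ij: "i \<le> j"
  have "take j w = take i w @ drop i (take j w)" using ij by (metis append_take_drop_id min.absorb1 take_take)
  moreover have "drop i (take j w) \<in> lists (alphabet k)" using w by (meson in_lists_conv_set in_set_dropD in_set_takeD)
  moreover have "length (drop i (take j w)) \<le> j - i" by simp
  ultimately show ?thesis using dword_app[of "drop i (take j w)" k ns "take i w"] by (smt (verit) of_nat_mono)
qed

lemma dword_take_le': "w \<in> lists (alphabet k) \<Longrightarrow> i \<le> j \<Longrightarrow> dword k ns (take j w) (take i w) \<le> real (j - i)"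
proof -
  assume w: "w \<in> lists (alphabet k)" and ij: "i \<le> j"
  have "take j w = take i w @ drop i (take j w)" using ij by (metis append_take_drop_id min.absorb1 take_take)
  moreover have "drop i (take j w) \<in> lists (alphabet k)" using w by (meson in_lists_conv_set in_set_dropD in_set_takeD)
  moreover have "length (drop i (take j w)) \<le> j - i" by simp
  ultimately show ?thesis using dword_app'[of "drop i (take j w)" k ns "take i w"] by (smt (verit) of_nat_mono)
qed

lemma wpath_vertex:
  assumes s: "0 \<le> s" and sl: "s < real (length w)"
  shows "\<exists>a \<theta>. 0 \<le> \<theta> \<and> \<theta> \<le> 1 \<and> (wpath w s = (take (nat \<lfloor>s\<rfloor>) w, a, \<theta>) \<or> wpath w s = (take (Suc (nat \<lfloor>s\<rfloor>)) w, a, \<theta>))"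
proof -
  let ?i = "nat \<lfloor>s\<rfloor>"
  have ri: "real ?i = of_int \<lfloor>s\<rfloor>" using s by simp
  have th: "0 \<le> s - real ?i" "s - real ?i \<le> 1" using ri by linarith+
  have il: "?i < length w" using sl s by linarith
  then have tk: "take ?i w @ [w ! ?i] = take (Suc ?i) w" by (simp add: take_Suc_conv_app_nth)
  show ?thesis
  proof (cases "snd (w ! ?i)")
    case True
    then have "wpath w s = (take (Suc ?i) w, fst (w ! ?i), 1 - (s - real ?i))"
      using sl tk by (simp add: wpath_def Let_def)
    then show ?thesis using th by (intro exI[of _ "fst (w ! ?i)"] exI[of _ "1 - (s - real ?i)"]) auto
  next
    case False
    then have "wpath w s = (take ?i w, fst (w ! ?i), s - real ?i)"
      using sl by (simp add: wpath_def Let_def)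
    then show ?thesis using th by (intro exI[of _ "fst (w ! ?i)"] exI[of _ "s - real ?i"]) auto
  qed
qed

lemma wpath_end: "real (length w) \<le> s \<Longrightarrow> wpath w s = (w, Ga, 0)"
  by (simp add: wpath_def)


definition clamp :: "real \<Rightarrow> real" where "clamp x = max 0 (min 1 x)"

definition psi :: "(nat \<Rightarrow> nat) \<Rightarrow> nat \<Rightarrow> real \<Rightarrow> real" where
  "psi g n s = (\<Sum>i<n. (real (g (Suc i)) - real (g i)) * clamp (s - real i))"

definition phi :: "(nat \<Rightarrow> nat) \<Rightarrow> nat \<Rightarrow> real \<Rightarrow> real" where
  "phi g N s = real (g 0) + psi g N s + max 0 (s - real N)"

lemma psi_full: "real n \<le> s \<Longrightarrow> psi g n s = real (g n) - real (g 0)"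
proof (induction n)
  case 0 then show ?case by (simp add: psi_def)
next
  case (Suc n)
  have "clamp (s - real n) = 1" using Suc.prems by (simp add: clamp_def)
  then show ?case using Suc by (simp add: psi_def)
qed

lemma psi_mid: "j < n \<Longrightarrow> real j \<le> s \<Longrightarrow> s \<le> real j + 1 \<Longrightarrow>
   psi g n s = real (g j) - real (g 0) + (real (g (Suc j)) - real (g j)) * (s - real j)"
proof (induction n)
  case 0 then show ?case by simp
next
  case (Suc n)
  show ?case
  proof (cases "j < n")
    case True
    have "clamp (s - real n) = 0" using Suc.prems True by (simp add: clamp_def)
    then show ?thesis using Suc True by (simp add: psi_def)
  next
    case False
    then have jn: "j = n" using Suc.prems by simp
    have "clamp (s - real n) = s - real n" using Suc.prems jn by (simp add: clamp_def)
    moreover have "psi g n s = real (g n) - real (g 0)" using psi_full[of n s g] Suc.prems jn by simp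
    ultimately show ?thesis using jn by (simp add: psi_def)
  qed
qed

lemma clamp_mono: "x \<le> y \<Longrightarrow> clamp x \<le> clamp y" by (simp add: clamp_def)
lemma clamp_nonneg: "0 \<le> clamp x" by (simp add: clamp_def)

lemma g_mono: "(\<forall>j<N. g j \<le> g (Suc j)) \<Longrightarrow> i \<le> j \<Longrightarrow> j \<le> N \<Longrightarrow> g i \<le> (g j :: nat)"
proof (induction j)
  case 0 then show ?case by simp
next
  case (Suc j)
  show ?case
  proof (cases "i = Suc j")
    case False
    then have "g i \<le> g j" using Suc by simp
    also have "g j \<le> g (Suc j)" using Suc.prems by simp
    finally show ?thesis .
  qed simp
qed

lemma phi_cont: "continuous_on A (phi g N)"
  unfolding phi_def psi_def clamp_def by (intro continuous_intros)

lemma phi_mono: "(\<forall>j<N. g j \<le> g (Suc j)) \<Longrightarrow> x \<le> y \<Longrightarrow> phi g N x \<le> phi g N y"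
  unfolding phi_def psi_def
  by (intro add_mono sum_mono mult_left_mono clamp_mono) auto

lemma phi_nonneg: "(\<forall>j<N. g j \<le> g (Suc j)) \<Longrightarrow> 0 \<le> phi g N x"
  unfolding phi_def psi_def by (intro add_nonneg_nonneg sum_nonneg mult_nonneg_nonneg clamp_nonneg) auto

lemma phi_ge: "(\<forall>j<N. g j \<le> g (Suc j)) \<Longrightarrow> x - real N \<le> phi g N x"
proof -
  assume m: "\<forall>j<N. g j \<le> g (Suc j)"
  have "0 \<le> psi g N x" unfolding psi_def using m by (intro sum_nonneg mult_nonneg_nonneg clamp_nonneg) auto
  then show ?thesis unfolding phi_def by simp
qed

lemma ft_g:
  fixes w u :: "letter list" and g :: "nat \<Rightarrow> nat" and C :: real
  assumes w: "w \<in> lists (alphabet k)" and u: "u \<in> lists (alphabet k)"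
    and gN: "g (length w) = length u" and gm: "\<forall>j < length w. g j \<le> g (Suc j)"
    and gd: "\<forall>j < length w. \<forall>r. g j \<le> r \<and> r \<le> g (Suc j) \<longrightarrow> dword k ns (take j w) (take r u) \<le> C"
    and e: "dword k ns w u \<le> C"
  shows "async_fellow_travel k ns (C + 4) w u"
  unfolding async_fellow_travel_def
proof (intro exI conjI allI impI)
  let ?N = "length w" and ?M = "length u"
  let ?f = "phi g ?N"
  show "?f ` {0..} \<subseteq> {0..}" using phi_nonneg[OF gm] by auto
  show "mono_on {0..} ?f" by (intro mono_onI phi_mono[OF gm])
  show "continuous_on {0..} ?f" by (rule phi_cont)
  show "proper_map (top_of_set {0..}) (top_of_set {0..}) ?f"
    by (rule proper_real[where T = "real ?N"]) (use phi_nonneg[OF gm] phi_ge[OF gm] phi_cont in auto)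
  fix s :: real assume s0: "0 \<le> s"
  have tail: "real ?N \<le> x \<Longrightarrow> ?f x = real ?M + (x - real ?N)" for x
    using psi_full[of ?N x g] gN by (simp add: phi_def)
  show "cdist k ns (wpath w s) (wpath u (?f s)) \<le> C + 4"
  proof (cases "real ?N \<le> s")
    case True
    then have "?f s \<ge> real ?M" using tail by simp
    then have "wpath u (?f s) = (u, Ga, 0)" by (simp add: wpath_end)
    moreover have "wpath w s = (w, Ga, 0)" using True by (simp add: wpath_end)
    ultimately show ?thesis using cdist_le[of k ns w Ga 0 u Ga 0] e by simp
  next
    case False
    let ?j = "nat \<lfloor>s\<rfloor>"
    have rj: "real ?j = of_int \<lfloor>s\<rfloor>" using s0 by simp
    have js: "real ?j \<le> s" "s \<le> real ?j + 1" using rj by linarith+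
    have jN: "?j < ?N" using False s0 by linarith
    have fs: "?f s = real (g ?j) + (real (g (Suc ?j)) - real (g ?j)) * (s - real ?j)"
      using psi_mid[OF jN js] False by (simp add: phi_def)
    have gj: "g ?j \<le> g (Suc ?j)" using gm jN by simp
    have fl: "real (g ?j) \<le> ?f s" "?f s \<le> real (g (Suc ?j))"
    proof -
      have "0 \<le> (real (g (Suc ?j)) - real (g ?j)) * (s - real ?j)" using gj js by simp
      then show "real (g ?j) \<le> ?f s" using fs by simp
      have "(real (g (Suc ?j)) - real (g ?j)) * (s - real ?j) \<le> (real (g (Suc ?j)) - real (g ?j)) * 1"
        using gj js rj by (intro mult_left_mono) linarith+
      then show "?f s \<le> real (g (Suc ?j))" using fs by simp
    qed
    have gSN: "g (Suc ?j) \<le> ?M" using g_mono[OF gm, of "Suc ?j" ?N] jN gN by simp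
    obtain a \<theta> where th: "0 \<le> \<theta>" "\<theta> \<le> 1"
      and wv: "wpath w s = (take ?j w, a, \<theta>) \<or> wpath w s = (take (Suc ?j) w, a, \<theta>)"
      using wpath_vertex[OF s0] False by (meson not_le)
    have dS: "dword k ns (take (Suc ?j) w) (take ?j w) \<le> 1"
      using dword_take_le'[OF w, of ?j "Suc ?j" ns] by simp
    obtain Pw where Pw: "wpath w s = (Pw, a, \<theta>)" and dPw: "dword k ns Pw (take ?j w) \<le> 1"
      and Pwl: "Pw \<in> lists (alphabet k)"
    proof (cases "wpath w s = (take ?j w, a, \<theta>)")
      case True
      then show ?thesis using that[of "take ?j w"] dword_eq0[of k ns "take ?j w"] take_alph[OF w] by simp
    next
      case False
      then have "wpath w s = (take (Suc ?j) w, a, \<theta>)" using wv by simp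
      then show ?thesis using that[of "take (Suc ?j) w"] dS take_alph[OF w] by simp
    qed
    obtain r Pu b \<eta> where r: "g ?j \<le> r" "r \<le> g (Suc ?j)" and Pu: "wpath u (?f s) = (Pu, b, \<eta>)"
      and et: "0 \<le> \<eta>" "\<eta> \<le> 1" and dPu: "dword k ns (take r u) Pu \<le> 1" and Pul: "Pu \<in> lists (alphabet k)"
    proof (cases "real ?M \<le> ?f s")
      case True
      then have "wpath u (?f s) = (u, Ga, 0)" by (simp add: wpath_end)
      moreover have "?M = g (Suc ?j)" using True fl(2) gSN by linarith
      ultimately show ?thesis using that[of "g (Suc ?j)" u Ga 0] gj dword_eq0[of k ns u] u by simp
    next
      case F: False
      let ?r = "nat \<lfloor>?f s\<rfloor>"
      have f0: "0 \<le> ?f s" using phi_nonneg[OF gm] by simp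
      have rr: "real ?r = of_int \<lfloor>?f s\<rfloor>" using f0 by simp
      have r1: "g ?j \<le> ?r" using fl(1) rr by linarith
      have r2: "?r \<le> g (Suc ?j)" using fl(2) rr by linarith
      obtain b \<eta> where et: "0 \<le> \<eta>" "\<eta> \<le> 1"
        and uv: "wpath u (?f s) = (take ?r u, b, \<eta>) \<or> wpath u (?f s) = (take (Suc ?r) u, b, \<eta>)"
        using wpath_vertex[OF f0] F by (meson not_le)
      show ?thesis
      proof (cases "wpath u (?f s) = (take ?r u, b, \<eta>)")
        case True
        then show ?thesis using that[of ?r "take ?r u" b \<eta>] r1 r2 et dword_eq0[of k ns "take ?r u"] take_alph[OF u] by simp
      next
        case False
        then have "wpath u (?f s) = (take (Suc ?r) u, b, \<eta>)" using uv by simp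
        then show ?thesis using that[of ?r "take (Suc ?r) u" b \<eta>] r1 r2 et
            dword_take_le[OF u, of ?r "Suc ?r" ns] take_alph[OF u] by simp
      qed
    qed
    have dm: "dword k ns (take ?j w) (take r u) \<le> C" using gd jN r by blast
    have "dword k ns Pw Pu \<le> dword k ns Pw (take ?j w) + dword k ns (take ?j w) Pu"
      by (rule dword_tri) (use Pwl Pul take_alph[OF w] in auto)
    also have "dword k ns (take ?j w) Pu \<le> dword k ns (take ?j w) (take r u) + dword k ns (take r u) Pu"
      by (rule dword_tri) (use Pwl Pul take_alph[OF w] take_alph[OF u] in auto)
    finally have "dword k ns Pw Pu \<le> C + 2" using dPw dPu dm by simp
    then show ?thesis using cdist_le[of k ns Pw a \<theta> Pu b \<eta>] Pw Pu th et by simp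
  qed
qed



type_synonym blk = "letter list \<times> letter list"

fun gb :: "blk list \<Rightarrow> nat \<Rightarrow> nat" where
  "gb [] j = 0"
| "gb (b # bs) j = (if j < length (fst b) then min j (length (snd b)) else length (snd b) + gb bs (j - length (fst b)))"

abbreviation cw :: "blk list \<Rightarrow> letter list" where "cw bs \<equiv> concat (map fst bs)"
abbreviation cu :: "blk list \<Rightarrow> letter list" where "cu bs \<equiv> concat (map snd bs)"

definition anch :: "nat \<Rightarrow> (nat \<Rightarrow> int) \<Rightarrow> real \<Rightarrow> letter list \<Rightarrow> letter list \<Rightarrow> blk list \<Rightarrow> bool" where
  "anch k ns C P Q bs \<longleftrightarrow> (\<forall>i \<le> length bs. dword k ns (P @ cw (take i bs)) (Q @ cu (take i bs)) \<le> C)"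

definition okbl :: "nat \<Rightarrow> blk list \<Rightarrow> bool" where
  "okbl k bs \<longleftrightarrow> (\<forall>b \<in> set bs. fst b \<in> lists (alphabet k) \<and> snd b \<in> lists (alphabet k))"

lemma okbl_Cons[simp]: "okbl k (b # bs) \<longleftrightarrow> fst b \<in> lists (alphabet k) \<and> snd b \<in> lists (alphabet k) \<and> okbl k bs"
  by (auto simp: okbl_def)
lemma okbl_cw: "okbl k bs \<Longrightarrow> cw bs \<in> lists (alphabet k)"
  by (induction bs) auto
lemma okbl_cu: "okbl k bs \<Longrightarrow> cu bs \<in> lists (alphabet k)"
  by (induction bs) auto

lemma gb_end: "gb bs (length (cw bs)) = length (cu bs)"
  by (induction bs) auto

lemma gb_mono: "j < length (cw bs) \<Longrightarrow> gb bs j \<le> gb bs (Suc j)"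
proof (induction bs arbitrary: j)
  case (Cons b bs)
  show ?case
  proof (cases "j < length (fst b)")
    case True then show ?thesis by auto
  next
    case False
    then have "j - length (fst b) < length (cw bs)" using Cons.prems by auto
    then have "gb bs (j - length (fst b)) \<le> gb bs (Suc (j - length (fst b)))" by (rule Cons.IH)
    moreover have "Suc j - length (fst b) = Suc (j - length (fst b))" using False by simp
    ultimately show ?thesis using False by simp
  qed
qed simp

lemma anch_Cons: "anch k ns C P Q (b # bs) \<longleftrightarrow> dword k ns P Q \<le> C \<and> anch k ns C (P @ fst b) (Q @ snd b) bs"
proof
  assume a: "anch k ns C P Q (b # bs)"
  have "dword k ns P Q \<le> C" using a[unfolded anch_def, rule_format, of 0] by simp
  moreover have "anch k ns C (P @ fst b) (Q @ snd b) bs"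
    unfolding anch_def using a[unfolded anch_def] by (auto dest: spec[of _ "Suc _"])
  ultimately show "dword k ns P Q \<le> C \<and> anch k ns C (P @ fst b) (Q @ snd b) bs" ..
next
  assume a: "dword k ns P Q \<le> C \<and> anch k ns C (P @ fst b) (Q @ snd b) bs"
  show "anch k ns C P Q (b # bs)" unfolding anch_def
  proof (intro allI impI)
    fix i assume "i \<le> length (b # bs)"
    then show "dword k ns (P @ cw (take i (b # bs))) (Q @ cu (take i (b # bs))) \<le> C"
      using a unfolding anch_def by (cases i) auto
  qed
qed

lemma anch_Nil: "anch k ns C P Q [] \<longleftrightarrow> dword k ns P Q \<le> C"
  by (simp add: anch_def)

lemma anch_append: "anch k ns C P Q bs1 \<Longrightarrow> anch k ns C (P @ cw bs1) (Q @ cu bs1) bs2 \<Longrightarrow> anch k ns C P Q (bs1 @ bs2)"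
  by (induction bs1 arbitrary: P Q) (auto simp: anch_Cons anch_Nil)

lemma blk_aux:
  assumes "anch k ns C P Q bs" "okbl k bs" "P \<in> lists (alphabet k)" "Q \<in> lists (alphabet k)"
    "\<forall>b\<in>set bs. length (snd b) \<le> D" "r \<le> gb bs 0"
  shows "dword k ns P (Q @ take r (cu bs)) \<le> C + real D"
  using assms
proof (induction bs arbitrary: P Q r)
  case Nil then show ?case by (simp add: anch_Nil)
next
  case (Cons b bs)
  have dPQ: "dword k ns P Q \<le> C" and an: "anch k ns C (P @ fst b) (Q @ snd b) bs"
    using Cons.prems(1) by (auto simp: anch_Cons)
  have sb: "snd b \<in> lists (alphabet k)" "fst b \<in> lists (alphabet k)" using Cons.prems(2) by auto
  show ?case
  proof (cases "0 < length (fst b)")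
    case True
    then have "r = 0" using Cons.prems(6) by simp
    then show ?thesis using dPQ by simp
  next
    case False
    then have fb: "fst b = []" by simp
    show ?thesis
    proof (cases "r \<le> length (snd b)")
      case True
      have tk: "take r (snd b) \<in> lists (alphabet k)" using take_alph[OF sb(1)] .
      have "dword k ns P (Q @ take r (snd b)) \<le> dword k ns P Q + dword k ns Q (Q @ take r (snd b))"
        by (rule dword_tri) (use Cons.prems tk in auto)
      also have "\<dots> \<le> C + real r" using dPQ dword_app[OF tk, of ns Q] True by simp
      also have "\<dots> \<le> C + real D" using True Cons.prems(5) by simp
      finally show ?thesis using True by simp
    next
      case F: False
      have "r - length (snd b) \<le> gb bs 0" using Cons.prems(6) fb F by simp
      then have "dword k ns (P @ fst b) ((Q @ snd b) @ take (r - length (snd b)) (cu bs)) \<le> C + real D"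
        using Cons.IH[OF an] Cons.prems sb by auto
      then show ?thesis using F fb by simp
    qed
  qed
qed

lemma blk_main:
  assumes "anch k ns C P Q bs" "okbl k bs" "P \<in> lists (alphabet k)" "Q \<in> lists (alphabet k)"
    "\<forall>b\<in>set bs. length (fst b) \<le> D \<and> length (snd b) \<le> D"
    "j < length (cw bs)" "gb bs j \<le> r" "r \<le> gb bs (Suc j)"
  shows "dword k ns (P @ take j (cw bs)) (Q @ take r (cu bs)) \<le> C + 2 * real D + 1"
  using assms
proof (induction bs arbitrary: P Q j r)
  case Nil then show ?case by simp
next
  case (Cons b bs)
  have dPQ: "dword k ns P Q \<le> C" and an: "anch k ns C (P @ fst b) (Q @ snd b) bs"
    using Cons.prems(1) by (auto simp: anch_Cons)
  have sb: "snd b \<in> lists (alphabet k)" "fst b \<in> lists (alphabet k)" and ob: "okbl k bs"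
    using Cons.prems(2) by auto
  have Db: "length (fst b) \<le> D" "length (snd b) \<le> D" using Cons.prems(5) by auto
  show ?case
  proof (cases "j < length (fst b)")
    case True
    have tj: "take j (cw (b # bs)) = take j (fst b)" using True by simp
    show ?thesis
    proof (cases "r \<le> length (snd b)")
      case r: True
      have tr: "take r (cu (b # bs)) = take r (snd b)" using r by simp
      have t1: "take j (fst b) \<in> lists (alphabet k)" "take r (snd b) \<in> lists (alphabet k)"
        using take_alph sb by auto
      have "dword k ns (P @ take j (fst b)) (Q @ take r (snd b))
            \<le> dword k ns (P @ take j (fst b)) P + dword k ns P (Q @ take r (snd b))"
        by (rule dword_tri) (use Cons.prems t1 in auto)
      also have "dword k ns P (Q @ take r (snd b)) \<le> dword k ns P Q + dword k ns Q (Q @ take r (snd b))"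
        by (rule dword_tri) (use Cons.prems t1 in auto)
      finally have "dword k ns (P @ take j (fst b)) (Q @ take r (snd b)) \<le> real j + C + real r"
        using dPQ dword_app[OF t1(2), of ns Q] dword_app'[OF t1(1), of ns P] True by simp
      moreover have "real j + real r \<le> 2 * real D" using True r Db by simp
      ultimately show ?thesis unfolding tj tr by linarith
    next
      case r: False
      have sj: "Suc j = length (fst b)"
      proof (rule ccontr)
        assume "Suc j \<noteq> length (fst b)"
        then have "gb (b # bs) (Suc j) \<le> length (snd b)" using True by simp
        then show False using r Cons.prems(8) by simp
      qed
      have fbj: "fst b = take j (fst b) @ [fst b ! j]" using sj
        by (metis lessI take_Suc_conv_app_nth take_all order.refl)
      have tr: "take r (cu (b # bs)) = snd b @ take (r - length (snd b)) (cu bs)" using r by simp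
      have rr: "r - length (snd b) \<le> gb bs 0" using Cons.prems(8) sj by simp
      have a1: "dword k ns (P @ fst b) ((Q @ snd b) @ take (r - length (snd b)) (cu bs)) \<le> C + real D"
        by (rule blk_aux[OF an ob]) (use Cons.prems sb rr in auto)
      have t1: "take j (fst b) \<in> lists (alphabet k)" using take_alph sb by auto
      have lj: "[fst b ! j] \<in> lists (alphabet k)" using sb(2) fbj by (metis Cons_in_lists_iff append_in_lists_conv)
      have d1: "dword k ns (P @ take j (fst b)) (P @ fst b) \<le> 1"
      proof -
        have eq: "(P @ take j (fst b)) @ [fst b ! j] = P @ fst b" using fbj by (metis append.assoc)
        show ?thesis using dword_app[OF lj, of ns "P @ take j (fst b)"] unfolding eq by simp
      qed
      have "dword k ns (P @ take j (fst b)) ((Q @ snd b) @ take (r - length (snd b)) (cu bs))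
            \<le> dword k ns (P @ take j (fst b)) (P @ fst b) + dword k ns (P @ fst b) ((Q @ snd b) @ take (r - length (snd b)) (cu bs))"
        by (rule dword_tri) (use Cons.prems t1 sb take_alph[OF okbl_cu[OF ob]] in auto)
      then show ?thesis unfolding tj tr using d1 a1 by simp
    qed
  next
    case False
    have tj: "take j (cw (b # bs)) = fst b @ take (j - length (fst b)) (cw bs)" using False by simp
    have g1: "gb (b # bs) j = length (snd b) + gb bs (j - length (fst b))" using False by simp
    have g2: "gb (b # bs) (Suc j) = length (snd b) + gb bs (Suc (j - length (fst b)))"
      using False by (simp add: Suc_diff_le)
    have rs: "length (snd b) \<le> r" using g1 Cons.prems(7) by simp
    have tr: "take r (cu (b # bs)) = snd b @ take (r - length (snd b)) (cu bs)" using rs by simp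
    have "dword k ns ((P @ fst b) @ take (j - length (fst b)) (cw bs)) ((Q @ snd b) @ take (r - length (snd b)) (cu bs))
          \<le> C + 2 * real D + 1"
      by (rule Cons.IH[OF an ob]) (use Cons.prems sb g1 g2 rs False in auto)
    then show ?thesis unfolding tj tr by simp
  qed
qed

lemma ft_blocks:
  assumes an: "anch k ns C [] [] bs" and ok: "okbl k bs"
    and D: "\<forall>b\<in>set bs. length (fst b) \<le> D \<and> length (snd b) \<le> D"
  shows "async_fellow_travel k ns (C + 2 * real D + 1 + 4) (cw bs) (cu bs)"
proof (rule ft_g)
  show "cw bs \<in> lists (alphabet k)" "cu bs \<in> lists (alphabet k)" using okbl_cw okbl_cu ok by auto
  show "gb bs (length (cw bs)) = length (cu bs)" by (rule gb_end)
  show "\<forall>j<length (cw bs). gb bs j \<le> gb bs (Suc j)" using gb_mono by blast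
  show "\<forall>j<length (cw bs). \<forall>r. gb bs j \<le> r \<and> r \<le> gb bs (Suc j) \<longrightarrow>
          dword k ns (take j (cw bs)) (take r (cu bs)) \<le> C + 2 * real D + 1"
    using blk_main[OF an ok _ _ D] by auto
  have "dword k ns (cw bs) (cu bs) \<le> C" using an unfolding anch_def by (auto dest: spec[of _ "length bs"])
  then show "dword k ns (cw bs) (cu bs) \<le> C + 2 * real D + 1" by simp
qed



definition pcom :: "int \<Rightarrow> int \<Rightarrow> int" where
  "pcom c c' = (if 0 < c \<and> 0 < c' then min c c' else if c < 0 \<and> c' < 0 then max c c' else 0)"

definition pblocks :: "gen \<Rightarrow> int \<Rightarrow> int \<Rightarrow> blk list" where
  "pblocks g c c' = replicate (nat \<bar>pcom c c'\<bar>) ([(g, pcom c c' < 0)], [(g, pcom c c' < 0)])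
     @ [(gpow g (c - pcom c c'), gpow g (c' - pcom c c'))]"

lemma gpow_split: "(0 \<le> p \<and> p \<le> c) \<or> (c \<le> p \<and> p \<le> 0) \<Longrightarrow> gpow g c = gpow g p @ gpow g (c - p)"
proof -
  assume h: "(0 \<le> p \<and> p \<le> c) \<or> (c \<le> p \<and> p \<le> 0)"
  then show ?thesis
  proof
    assume a: "0 \<le> p \<and> p \<le> c"
    then have "nat c = nat p + nat (c - p)" by linarith
    then show ?thesis using a by (simp add: gpow_def replicate_add)
  next
    assume a: "c \<le> p \<and> p \<le> 0"
    then have "nat (- c) = nat (- p) + nat (- (c - p))" by linarith
    then show ?thesis using a by (auto simp: gpow_def replicate_add)
  qed
qed

lemma concat_rep_diag: "concat (map fst (replicate n ([y], [y]))) = replicate n y"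
  "concat (map snd (replicate n ([y], [y]))) = replicate n y"
  by (induction n) auto

lemma rep_gpow: "replicate (nat \<bar>p\<bar>) (g, p < 0) = gpow g p"
  by (simp add: gpow_def)

lemma pcom_props: "(0 \<le> pcom c c' \<and> pcom c c' \<le> c) \<or> (c \<le> pcom c c' \<and> pcom c c' \<le> 0)"
  "(0 \<le> pcom c c' \<and> pcom c c' \<le> c') \<or> (c' \<le> pcom c c' \<and> pcom c c' \<le> 0)"
  by (auto simp: pcom_def)

lemma cw_pblocks: "cw (pblocks g c c') = gpow g c"
  using gpow_split[OF pcom_props(1)[of c c'], where g=g] by (simp add: pblocks_def concat_rep_diag rep_gpow)

lemma cu_pblocks: "cu (pblocks g c c') = gpow g c'"
  using gpow_split[OF pcom_props(2)[of c c'], where g=g] by (simp add: pblocks_def concat_rep_diag rep_gpow)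

lemma length_gpow[simp]: "length (gpow g c) = nat \<bar>c\<bar>"
  by (simp add: gpow_def)

lemma pblocks_len: "b \<in> set (pblocks g c c') \<Longrightarrow> length (fst b) \<le> max 1 (nat \<bar>c - c'\<bar>) \<and> length (snd b) \<le> max 1 (nat \<bar>c - c'\<bar>)"
  by (auto simp: pblocks_def pcom_def split: if_splits)

lemma gpow_alph: "g \<in> gens k \<Longrightarrow> gpow g c \<in> lists (alphabet k)"
  by (auto simp: gpow_def alphabet_def)

lemma Ga_gens[simp]: "Ga \<in> gens k" and Gt_gens[simp]: "Gt \<in> gens k"
  by (auto simp: gens_def)

lemma okbl_pblocks: "g \<in> gens k \<Longrightarrow> okbl k (pblocks g c c')"
  by (auto simp: okbl_def pblocks_def alphabet_def gpow_def)

lemma anch_rep: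
  "(\<forall>i \<le> n. dword k ns (P @ replicate i y) (Q @ replicate i y) \<le> C) \<Longrightarrow> anch k ns C P Q (replicate n ([y], [y]))"
proof (induction n arbitrary: P Q)
  case 0 then show ?case by (auto simp: anch_Nil)
next
  case (Suc n)
  have "dword k ns P Q \<le> C" using Suc.prems[rule_format, of 0] by simp
  moreover have "anch k ns C (P @ [y]) (Q @ [y]) (replicate n ([y], [y]))"
  proof (rule Suc.IH, intro allI impI)
    fix i assume "i \<le> n"
    then show "dword k ns ((P @ [y]) @ replicate i y) ((Q @ [y]) @ replicate i y) \<le> C"
      using Suc.prems[rule_format, of "Suc i"] by (simp add: replicate_append_same[symmetric])
  qed
  ultimately show ?case by (simp add: anch_Cons)
qed

lemma anch_pblocks:
  assumes "\<forall>x. dword k ns (P @ gpow g x) (Q @ gpow g x) \<le> C"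
    and "dword k ns (P @ gpow g c) (Q @ gpow g c') \<le> C"
  shows "anch k ns C P Q (pblocks g c c')"
  unfolding pblocks_def
proof (rule anch_append)
  let ?p = "pcom c c'"
  show "anch k ns C P Q (replicate (nat \<bar>?p\<bar>) ([(g, ?p < 0)], [(g, ?p < 0)]))"
  proof (rule anch_rep, intro allI impI)
    fix i assume "i \<le> nat \<bar>?p\<bar>"
    have "replicate i (g, ?p < 0) = gpow g (if ?p < 0 then - int i else int i)" by (simp add: gpow_def)
    then show "dword k ns (P @ replicate i (g, ?p < 0)) (Q @ replicate i (g, ?p < 0)) \<le> C" using assms(1) by simp
  qed
  have e1: "gpow g ?p @ gpow g (c - ?p) = gpow g c" using gpow_split[OF pcom_props(1)[of c c'], where g=g] by simp
  have e2: "gpow g ?p @ gpow g (c' - ?p) = gpow g c'" using gpow_split[OF pcom_props(2)[of c c'], where g=g] by simp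
  show "anch k ns C (P @ cw (replicate (nat \<bar>?p\<bar>) ([(g, ?p < 0)], [(g, ?p < 0)])))
     (Q @ cu (replicate (nat \<bar>?p\<bar>) ([(g, ?p < 0)], [(g, ?p < 0)])))
     [(gpow g (c - ?p), gpow g (c' - ?p))]"
    using assms(1)[rule_format, of ?p] assms(2) e1 e2
    by (simp add: concat_rep_diag rep_gpow anch_Cons anch_Nil)
qed


definition Bd :: "nat \<Rightarrow> (nat \<Rightarrow> int) \<Rightarrow> int" where "Bd k ns = (\<Sum>i\<in>{1..k}. \<bar>ns i\<bar>)"

lemma Bd_nonneg: "0 \<le> Bd k ns" by (simp add: Bd_def sum_nonneg)

lemma bn_le: "okb k s \<Longrightarrow> \<bar>bn ns s\<bar> \<le> Bd k ns"
proof -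
  assume "okb k s"
  then obtain i e where s: "s = (Gb i, e)" and i: "i \<in> {1..k}" by (auto simp: okb_def) (metis prod.collapse)
  have "\<bar>ns i\<bar> \<le> (\<Sum>i\<in>{1..k}. \<bar>ns i\<bar>)" by (rule member_le_sum) (use i in auto)
  then show ?thesis by (simp add: s Bd_def)
qed

lemma dd: "d \<in> {1, -1} \<Longrightarrow> \<bar>d * x\<bar> = \<bar>x :: int\<bar>" by (auto simp: abs_mult)

lemma own_le: "d \<in> {1, -1} \<Longrightarrow> okb k s \<Longrightarrow> \<bar>own ns d s\<bar> \<le> Bd k ns"
  using bn_le[of k s ns] dd[of d "bn ns s"] Bd_nonneg[of k ns] by (auto simp: own_def)
lemma negc_le: "d \<in> {1, -1} \<Longrightarrow> okb k s \<Longrightarrow> \<bar>negc ns d s\<bar> \<le> Bd k ns"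
  using bn_le[of k s ns] dd[of d "bn ns s"] Bd_nonneg[of k ns] by (auto simp: negc_def)
lemma hnx_le: "d \<in> {1, -1} \<Longrightarrow> \<forall>x\<in>set r. okb k (fst x) \<Longrightarrow> \<bar>hnx ns d 0 r\<bar> \<le> Bd k ns"
  using Bd_nonneg[of k ns] negc_le by (cases r) (auto simp: hnx_def)

abbreviation tlet :: "int \<Rightarrow> letter" where "tlet d \<equiv> (Gt, 0 < d)"

lemma act_tlet: "d \<in> {1, -1} \<Longrightarrow> act ns (m, p) (tlet d) = (m - d, twist ns d p)"
  by auto

lemma tlet_alph: "tlet d \<in> alphabet k" by (simp add: alphabet_def)

lemma okb_alph: "okb k s \<Longrightarrow> s \<in> alphabet k"
  by (auto simp: okb_def alphabet_iff)

lemma anc: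
  assumes d: "d \<in> {1, -1}" and PQ: "P \<in> lists (alphabet k)" "Q \<in> lists (alphabet k)"
    and eP: "acts ns (0, 0, []) P = (m, p)" and eQ: "acts ns (0, 0, []) Q = (m - d, addl e (twist ns d p))"
  shows "dword k ns P Q \<le> 1 + real_of_int \<bar>e\<bar>"
proof -
  let ?z = "[tlet d] @ gpow Ga e"
  have z: "?z \<in> lists (alphabet k)" using tlet_alph gpow_alph[of Ga k e] by auto
  have "acts ns (0, 0, []) (P @ ?z) = (m - d, addl e (twist ns d p))"
    using eP act_tlet[OF d] by (simp add: acts_gpow_a)
  then have "dword k ns P Q \<le> real (length ?z)" using dword_ev[OF PQ z] eQ by simp
  then show ?thesis by simp
qed

lemma twn_e: "pre \<noteq> [] \<Longrightarrow> twn ns d e pre = addlast e (twn ns d 0 pre)"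
  using twn_twn[of ns 0 e d 0 pre] twn_d0[of ns e "twn ns d 0 pre"] by simp

definition sylb :: "syl \<times> syl \<Rightarrow> blk list" where
  "sylb yy = ([fst (fst yy)], [fst (fst yy)]) # pblocks Ga (snd (fst yy)) (snd (snd yy))"

lemma hnx_pre: "hnx ns d 0 (pre @ y # rest) = (if pre = [] then negc ns d (fst y) else hnx ns d 0 pre)"
  by (cases pre) (auto simp: hnx_def)

lemma pushb_app: "\<not> (r \<noteq> [] \<and> last r = (inv_letter s, 0)) \<Longrightarrow> pushb s (c, r) = (c, r @ [(s, 0)])"
  unfolding pushb_def fst_conv snd_conv by (rule if_not_P)

lemma noc_app: "noc (A @ B) \<Longrightarrow> noc A"
proof (induction B rule: rev_induct)
  case (snoc z B)
  then show ?case using noc_snoc[of "A @ B" z] by simp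
qed simp

lemma acts_s_a: "isb s \<Longrightarrow> \<not> (r \<noteq> [] \<and> last r = (inv_letter s, 0)) \<Longrightarrow>
   acts ns (m, c, r) (s # gpow Ga x) = (m, c, r @ [(s, x)])"
proof -
  assume ib: "isb s" and nl: "\<not> (r \<noteq> [] \<and> last r = (inv_letter s, 0))"
  obtain i e where s: "s = (Gb i, e)" using ib by (cases s; cases "fst s") auto
  have "act ns (m, c, r) s = (m, pushb s (c, r))" by (simp add: s)
  then have "act ns (m, c, r) s = (m, c, r @ [(s, 0)])" using pushb_app[OF nl] by simp
  then show ?thesis by (simp add: acts_gpow_a addl_def addlast_def)
qed

lemma syl_anch:
  assumes d: "d \<in> {1, -1}" and v: "vst (c0, pre @ rest)" and ok: "okst k (c0, pre @ rest)"
    and PQ: "P \<in> lists (alphabet k)" "Q \<in> lists (alphabet k)"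
    and eP: "acts ns (0, 0, []) P = (m, c0, pre)"
    and eQ: "acts ns (0, 0, []) Q = (m - d, c0 + hnx ns d 0 (pre @ rest), twn ns d (hnx ns d 0 rest) pre)"
  shows "anch k ns (1 + real_of_int (Bd k ns)) P Q (concat (map sylb (zip rest (twn ns d 0 rest))))"
  using v ok PQ eP eQ
proof (induction rest arbitrary: pre P Q)
  case Nil
  have "acts ns (0, 0, []) Q = (m - d, addl 0 (twist ns d (c0, pre)))"
    using Nil.prems(6) by (simp add: twist_def)
  then have "dword k ns P Q \<le> 1 + real_of_int \<bar>0\<bar>" by (rule anc[OF d Nil.prems(3,4,5)])
  then show ?case using Bd_nonneg[of k ns] by (simp add: anch_Nil)
next
  case (Cons y rest)
  obtain s c where y: "y = (s, c)" by (cases y)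
  let ?B = "real_of_int (Bd k ns)"
  let ?c' = "c + own ns d s + hnx ns d 0 rest"
  let ?c0' = "c0 + hnx ns d 0 (pre @ y # rest)"
  let ?pre' = "twn ns d (negc ns d s) pre"
  have oks: "okb k s" using Cons.prems(2) y by (simp add: okst_def)
  have okr: "\<forall>x\<in>set (pre @ y # rest). okb k (fst x)" using Cons.prems(2) by (simp add: okst_def)
  have okrest: "\<forall>x\<in>set rest. okb k (fst x)" using okr by simp
  have ib: "isb s" using Cons.prems(1) y by (simp add: vst_def)
  have sal: "s \<in> alphabet k" using okb_alph[OF oks] .
  have noc1: "noc (pre @ [y])" using Cons.prems(1) noc_app[of "pre @ [y]" rest] by (simp add: vst_def)
  then have nz: "pre \<noteq> [] \<Longrightarrow> s = inv_letter (fst (last pre)) \<Longrightarrow> snd (last pre) \<noteq> 0"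
    by (simp add: noc_snoc y)
  have nlP: "\<not> (pre \<noteq> [] \<and> last pre = (inv_letter s, 0))" using nz by auto
  have nlQ: "\<not> (?pre' \<noteq> [] \<and> last ?pre' = (inv_letter s, 0))"
  proof
    assume a: "?pre' \<noteq> [] \<and> last ?pre' = (inv_letter s, 0)"
    then have pn: "pre \<noteq> []" by simp
    have l: "last ?pre' = (fst (last pre), snd (last pre) + own ns d (fst (last pre)) + negc ns d s)"
      by (rule last_twn[OF pn])
    then have f: "fst (last pre) = inv_letter s" using a by simp
    have "own ns d (inv_letter s) + negc ns d s = 0" using own_negc_inv[of ns d "inv_letter s"] by simp
    then have "snd (last pre) = 0" using a l f by simp
    then show False using nz[OF pn] f by simp
  qed
  have hy: "hnx ns d 0 (y # rest) = negc ns d s" by (simp add: hnx_def y)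
  have eQ': "acts ns (0, 0, []) Q = (m - d, ?c0', ?pre')" using Cons.prems(6) hy by simp
  have ePx: "acts ns (0, 0, []) (P @ s # gpow Ga x) = (m, c0, pre @ [(s, x)])" for x
    using Cons.prems(5) acts_s_a[OF ib nlP] by simp
  have eQx: "acts ns (0, 0, []) (Q @ s # gpow Ga x) = (m - d, ?c0', ?pre' @ [(s, x)])" for x
    using eQ' acts_s_a[OF ib nlQ] by simp
  have tw: "twist ns d (c0, pre @ [(s, x)]) = (?c0', ?pre' @ [(s, x + own ns d s)])" for x
    by (simp add: twist_def twn_append hnx_pre y) (simp add: hnx_def)
  have lx: "P @ s # gpow Ga x \<in> lists (alphabet k)" "Q @ s # gpow Ga x \<in> lists (alphabet k)" for x
    using Cons.prems(3,4) sal gpow_alph[of Ga k x] by auto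
  have ancx: "dword k ns (P @ s # gpow Ga x) (Q @ s # gpow Ga x') \<le> 1 + real_of_int \<bar>x' - x - own ns d s\<bar>" for x x'
  proof (rule anc[OF d lx(1) lx(2) ePx])
    show "acts ns (0, 0, []) (Q @ s # gpow Ga x') = (m - d, addl (x' - x - own ns d s) (twist ns d (c0, pre @ [(s, x)])))"
      using eQx tw by (simp add: addl_def addlast_def)
  qed
  have d0: "dword k ns P Q \<le> 1 + ?B"
  proof -
    have "acts ns (0, 0, []) Q = (m - d, addl (negc ns d s) (twist ns d (c0, pre)))"
    proof (cases "pre = []")
      case True then show ?thesis using eQ' hy by (simp add: twist_def addl_def)
    next
      case False
      have "twn ns d (negc ns d s) pre = addlast (negc ns d s) (twn ns d 0 pre)" by (rule twn_e[OF False])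
      then show ?thesis using eQ' False by (simp add: twist_def addl_def hnx_pre)
    qed
    then have "dword k ns P Q \<le> 1 + real_of_int \<bar>negc ns d s\<bar>" by (rule anc[OF d Cons.prems(3,4,5)])
    then show ?thesis using negc_le[OF d oks, of ns] by simp
  qed
  have ap: "anch k ns (1 + ?B) (P @ [s]) (Q @ [s]) (pblocks Ga c ?c')"
  proof (rule anch_pblocks)
    show "\<forall>x. dword k ns ((P @ [s]) @ gpow Ga x) ((Q @ [s]) @ gpow Ga x) \<le> 1 + ?B"
    proof
      fix x
      have "dword k ns (P @ s # gpow Ga x) (Q @ s # gpow Ga x) \<le> 1 + real_of_int \<bar>x - x - own ns d s\<bar>"
        by (rule ancx)
      moreover have "\<bar>x - x - own ns d s\<bar> \<le> Bd k ns" using own_le[OF d oks, of ns] by simp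
      ultimately show "dword k ns ((P @ [s]) @ gpow Ga x) ((Q @ [s]) @ gpow Ga x) \<le> 1 + ?B"
        by (smt (verit) append.assoc append_Cons append_Nil of_int_le_iff)
    qed
    show "dword k ns ((P @ [s]) @ gpow Ga c) ((Q @ [s]) @ gpow Ga ?c') \<le> 1 + ?B"
    proof -
      have "dword k ns (P @ s # gpow Ga c) (Q @ s # gpow Ga ?c') \<le> 1 + real_of_int \<bar>?c' - c - own ns d s\<bar>"
        by (rule ancx)
      moreover have "\<bar>?c' - c - own ns d s\<bar> \<le> Bd k ns" using hnx_le[OF d okrest, of ns] by simp
      ultimately show ?thesis by (smt (verit) append.assoc append_Cons append_Nil of_int_le_iff)
    qed
  qed
  have IH: "anch k ns (1 + ?B) (P @ s # gpow Ga c) (Q @ s # gpow Ga ?c') (concat (map sylb (zip rest (twn ns d 0 rest))))"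
  proof (rule Cons.IH[of "pre @ [y]"])
    show "vst (c0, (pre @ [y]) @ rest)" "okst k (c0, (pre @ [y]) @ rest)" using Cons.prems(1,2) by simp_all
    show "P @ s # gpow Ga c \<in> lists (alphabet k)" "Q @ s # gpow Ga ?c' \<in> lists (alphabet k)" using lx by auto
    show "acts ns (0, 0, []) (P @ s # gpow Ga c) = (m, c0, pre @ [y])" using ePx y by simp
    have "twn ns d (hnx ns d 0 rest) (pre @ [y]) = ?pre' @ [(s, ?c')]"
      by (simp add: twn_append y hnx_def)
    then show "acts ns (0, 0, []) (Q @ s # gpow Ga ?c') = (m - d, c0 + hnx ns d 0 ((pre @ [y]) @ rest), twn ns d (hnx ns d 0 rest) (pre @ [y]))"
      using eQx by simp
  qed
  have bl: "concat (map sylb (zip (y # rest) (twn ns d 0 (y # rest))))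
      = ([s], [s]) # pblocks Ga c ?c' @ concat (map sylb (zip rest (twn ns d 0 rest)))"
    by (simp add: sylb_def y)
  have A: "anch k ns (1 + ?B) (P @ [s]) (Q @ [s]) (pblocks Ga c ?c' @ concat (map sylb (zip rest (twn ns d 0 rest))))"
    by (rule anch_append[OF ap]) (use IH in \<open>simp add: cw_pblocks cu_pblocks\<close>)
  show ?case unfolding bl using d0 A by (simp add: anch_Cons)
qed


lemma cw_syl: "length r' = length r \<Longrightarrow> map fst r' = map fst r \<Longrightarrow>
   cw (concat (map sylb (zip r r'))) = concat (map (\<lambda>x. fst x # gpow Ga (snd x)) r) \<and>
   cu (concat (map sylb (zip r r'))) = concat (map (\<lambda>x. fst x # gpow Ga (snd x)) r')"
proof (induction r arbitrary: r')
  case Nil then show ?case by simp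
next
  case (Cons y r)
  then obtain y' r'' where r': "r' = y' # r''" by (cases r') auto
  then show ?case using Cons by (simp add: sylb_def cw_pblocks cu_pblocks)
qed

lemma okbl_append: "okbl k (A @ B) \<longleftrightarrow> okbl k A \<and> okbl k B" by (auto simp: okbl_def)

lemma okbl_syl: "\<forall>x\<in>set r. okb k (fst x) \<Longrightarrow> okbl k (concat (map sylb (zip r r')))"
proof (induction r arbitrary: r')
  case Nil then show ?case by (simp add: okbl_def)
next
  case (Cons y r)
  show ?case
  proof (cases r')
    case Nil then show ?thesis by (simp add: okbl_def)
  next
    case (Cons y' r'')
    have "fst y \<in> alphabet k" using Cons.prems okb_alph by simp
    then show ?thesis using Cons.prems Cons.IH[of r''] \<open>r' = y' # r''\<close>
      by (simp add: sylb_def okbl_append okbl_pblocks)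
  qed
qed

lemma len_syl: "b \<in> set (concat (map sylb (zip r r'))) \<Longrightarrow>
   \<forall>p\<in>set (zip r r'). nat \<bar>snd (fst p) - snd (snd p)\<bar> \<le> D' \<Longrightarrow> 1 \<le> D' \<Longrightarrow>
   length (fst b) \<le> D' \<and> length (snd b) \<le> D'"
  by (auto simp: sylb_def dest!: pblocks_len)

lemma hard:
  assumes d: "d \<in> {1, -1}" and v: "vst (c0, r)" and ok: "okst k (c0, r)"
  shows "async_fellow_travel k ns (5 * real_of_int (Bd k ns) + 8) (nfw (m, c0, r)) (nfw (m - d, twist ns d (c0, r)))"
proof -
  let ?B = "Bd k ns"
  let ?r' = "twn ns d 0 r" and ?c0' = "c0 + hnx ns d 0 r"
  let ?S = "concat (map sylb (zip r ?r'))"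
  let ?bs = "pblocks Gt m (m - d) @ pblocks Ga c0 ?c0' @ ?S"
  define D where "D = nat (2 * ?B) + 1"
  have okr: "\<forall>x\<in>set r. okb k (fst x)" using ok by (simp add: okst_def)
  have B0: "0 \<le> ?B" by (rule Bd_nonneg)
  have cs: "cw ?S = concat (map (\<lambda>x. fst x # gpow Ga (snd x)) r)"
    "cu ?S = concat (map (\<lambda>x. fst x # gpow Ga (snd x)) ?r')" using cw_syl[of ?r' r] by auto
  have cwb: "cw ?bs = nfw (m, c0, r)" using cs by (simp add: cw_pblocks nfw_def sylw_def)
  have cub: "cu ?bs = nfw (m - d, twist ns d (c0, r))" using cs by (simp add: cu_pblocks nfw_def sylw_def twist_def)
  have ev0: "acts ns (0, 0, []) (gpow Gt j @ gpow Ga x) = (j, x, [])" for j x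
    using acts_gpow_t[of ns 0 j] by (simp add: acts_gpow_a addl_def)
  have ev1: "acts ns (0, 0, []) (gpow Gt j) = (j, 0, [])" for j using acts_gpow_t[of ns 0 j] by simp
  have la: "gpow Gt j @ gpow Ga x \<in> lists (alphabet k)" for j x using gpow_alph[of Gt k] gpow_alph[of Ga k] by auto
  have A1: "\<forall>x. dword k ns ([] @ gpow Gt x) ([] @ gpow Gt x) \<le> 1 + real_of_int ?B" using dword_eq0 B0 by simp
  have "dword k ns (gpow Gt m) (gpow Gt (m - d)) \<le> 1 + real_of_int \<bar>0\<bar>"
    by (rule anc[OF d gpow_alph gpow_alph ev1]) (use ev1 in \<open>simp_all add: twist_def\<close>)
  then have A2: "dword k ns ([] @ gpow Gt m) ([] @ gpow Gt (m - d)) \<le> 1 + real_of_int ?B" using B0 by simp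
  have A: "anch k ns (1 + real_of_int ?B) [] [] (pblocks Gt m (m - d))" by (rule anch_pblocks[OF A1 A2])
  have B1: "\<forall>x. dword k ns (gpow Gt m @ gpow Ga x) (gpow Gt (m - d) @ gpow Ga x) \<le> 1 + real_of_int ?B"
  proof
    fix x
    have "dword k ns (gpow Gt m @ gpow Ga x) (gpow Gt (m - d) @ gpow Ga x) \<le> 1 + real_of_int \<bar>0\<bar>"
      by (rule anc[OF d la la ev0]) (use ev0 in \<open>simp add: twist_def addl_def\<close>)
    then show "dword k ns (gpow Gt m @ gpow Ga x) (gpow Gt (m - d) @ gpow Ga x) \<le> 1 + real_of_int ?B"
      using B0 by simp
  qed
  have "dword k ns (gpow Gt m @ gpow Ga c0) (gpow Gt (m - d) @ gpow Ga ?c0') \<le> 1 + real_of_int \<bar>hnx ns d 0 r\<bar>"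
    by (rule anc[OF d la la ev0]) (use ev0 in \<open>simp add: twist_def addl_def\<close>)
  then have B2: "dword k ns (gpow Gt m @ gpow Ga c0) (gpow Gt (m - d) @ gpow Ga ?c0') \<le> 1 + real_of_int ?B"
    using hnx_le[OF d okr, of ns] by simp
  have Bp: "anch k ns (1 + real_of_int ?B) (gpow Gt m) (gpow Gt (m - d)) (pblocks Ga c0 ?c0')"
    by (rule anch_pblocks[OF B1 B2])
  have C: "anch k ns (1 + real_of_int ?B) (gpow Gt m @ gpow Ga c0) (gpow Gt (m - d) @ gpow Ga ?c0') ?S"
    using syl_anch[OF d, of c0 "[]" r k "gpow Gt m @ gpow Ga c0" "gpow Gt (m - d) @ gpow Ga ?c0'" ns m] v ok la ev0
    by simp
  have an: "anch k ns (1 + real_of_int ?B) [] [] ?bs"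
  proof (rule anch_append[OF A], rule anch_append)
    show "anch k ns (1 + real_of_int ?B) ([] @ cw (pblocks Gt m (m - d))) ([] @ cu (pblocks Gt m (m - d))) (pblocks Ga c0 ?c0')"
      using Bp by (simp add: cw_pblocks cu_pblocks)
    show "anch k ns (1 + real_of_int ?B) (([] @ cw (pblocks Gt m (m - d))) @ cw (pblocks Ga c0 ?c0'))
       (([] @ cu (pblocks Gt m (m - d))) @ cu (pblocks Ga c0 ?c0')) ?S"
      using C by (simp add: cw_pblocks cu_pblocks)
  qed
  have okb: "okbl k ?bs" using okbl_syl[OF okr] by (simp add: okbl_append okbl_pblocks)
  have Dd: "\<forall>b\<in>set ?bs. length (fst b) \<le> D \<and> length (snd b) \<le> D"
  proof
    fix b assume b: "b \<in> set ?bs"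
    have h1: "nat \<bar>c0 - ?c0'\<bar> \<le> D" using hnx_le[OF d okr, of ns] by (simp add: D_def)
    have h2: "\<forall>p\<in>set (zip r ?r'). nat \<bar>snd (fst p) - snd (snd p)\<bar> \<le> D"
    proof
      fix p assume "p \<in> set (zip r ?r')"
      then obtain i where i: "i < length r" "p = (r ! i, ?r' ! i)" by (auto simp: in_set_zip)
      have "?r' ! i = (fst (r ! i), snd (r ! i) + own ns d (fst (r ! i)) + hnx ns d 0 (drop (Suc i) r))"
        using i(1)
      proof (induction r arbitrary: i)
        case (Cons y r) then show ?case by (cases i) auto
      qed simp
      moreover have "okb k (fst (r ! i))" using okr i(1) by simp
      moreover have "\<forall>x\<in>set (drop (Suc i) r). okb k (fst x)" using okr by (meson in_set_dropD)
      ultimately have "\<bar>snd (fst p) - snd (snd p)\<bar> \<le> 2 * ?B"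
        using own_le[OF d, of k "fst (r ! i)" ns] hnx_le[OF d, of "drop (Suc i) r" k ns] i(2) by simp
      then show "nat \<bar>snd (fst p) - snd (snd p)\<bar> \<le> D" by (simp add: D_def)
    qed
    have D1: "1 \<le> D" by (simp add: D_def)
    have "b \<in> set (pblocks Gt m (m - d)) \<or> b \<in> set (pblocks Ga c0 ?c0') \<or> b \<in> set ?S" using b by simp
    then show "length (fst b) \<le> D \<and> length (snd b) \<le> D"
    proof (elim disjE)
      assume "b \<in> set (pblocks Gt m (m - d))"
      then have "length (fst b) \<le> max 1 (nat \<bar>m - (m - d)\<bar>) \<and> length (snd b) \<le> max 1 (nat \<bar>m - (m - d)\<bar>)"
        by (rule pblocks_len)
      moreover have "max 1 (nat \<bar>m - (m - d)\<bar>) = 1" using d by auto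
      ultimately show ?thesis using D1 by simp
    next
      assume "b \<in> set (pblocks Ga c0 ?c0')"
      then have "length (fst b) \<le> max 1 (nat \<bar>c0 - ?c0'\<bar>) \<and> length (snd b) \<le> max 1 (nat \<bar>c0 - ?c0'\<bar>)"
        by (rule pblocks_len)
      then show ?thesis using D1 h1 by (simp add: max_def split: if_splits)
    next
      assume "b \<in> set ?S"
      then show ?thesis using len_syl[of b r ?r' D] h2 D1 by blast
    qed
  qed
  have "async_fellow_travel k ns (1 + real_of_int ?B + 2 * real D + 1 + 4) (cw ?bs) (cu ?bs)"
    by (rule ft_blocks[OF an okb Dd])
  moreover have "1 + real_of_int ?B + 2 * real D + 1 + 4 = 5 * real_of_int ?B + 8" using B0 by (simp add: D_def)
  ultimately show ?thesis using cwb cub by (simp add: add.commute)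
qed



lemma ft_mono: "async_fellow_travel k ns K w u \<Longrightarrow> K \<le> K' \<Longrightarrow> async_fellow_travel k ns K' w u"
  unfolding async_fellow_travel_def by (meson order_trans)

definition diag :: "letter list \<Rightarrow> blk list" where "diag w = map (\<lambda>y. ([y], [y])) w"

lemma cw_diag: "cw (diag w) = w" and cu_diag: "cu (diag w) = w"
  by (induction w) (auto simp: diag_def)

lemma okbl_diag: "w \<in> lists (alphabet k) \<Longrightarrow> okbl k (diag w)"
  by (auto simp: okbl_def diag_def)

lemma anch_diag: "0 \<le> C \<Longrightarrow> anch k ns C P P (diag w)"
proof -
  assume C: "0 \<le> C"
  have "cw (take i (diag w)) = cu (take i (diag w))" for i
  proof -
    have "take i (diag w) = diag (take i w)" by (simp add: diag_def take_map)
    then show ?thesis by (simp only: cw_diag cu_diag)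
  qed
  then show ?thesis unfolding anch_def using dword_eq0 C by simp
qed

lemma len_diag: "b \<in> set (diag w) \<Longrightarrow> length (fst b) \<le> 1 \<and> length (snd b) \<le> 1"
  by (auto simp: diag_def)

lemma ft_snoc: "w \<in> lists (alphabet k) \<Longrightarrow> x \<in> alphabet k \<Longrightarrow> async_fellow_travel k ns 8 w (w @ [x])"
proof -
  assume w: "w \<in> lists (alphabet k)" and x: "x \<in> alphabet k"
  let ?bs = "diag w @ [([], [x])]"
  have an: "anch k ns 1 [] [] ?bs"
  proof (rule anch_append[OF anch_diag])
    have "dword k ns w (w @ [x]) \<le> 1" using dword_app[of "[x]" k ns w] x by simp
    then show "anch k ns 1 ([] @ cw (diag w)) ([] @ cu (diag w)) [([], [x])]"
      by (simp add: cw_diag cu_diag anch_Cons anch_Nil dword_eq0)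
  qed simp
  have ok: "okbl k ?bs" using okbl_diag[OF w] x by (simp add: okbl_append okbl_def)
  have D: "\<forall>b\<in>set ?bs. length (fst b) \<le> 1 \<and> length (snd b) \<le> 1" using len_diag by auto
  have "async_fellow_travel k ns (1 + 2 * real 1 + 1 + 4) (cw ?bs) (cu ?bs)" by (rule ft_blocks[OF an ok D])
  then show ?thesis by (simp add: cw_diag cu_diag)
qed

lemma ft_unsnoc: "w \<in> lists (alphabet k) \<Longrightarrow> x \<in> alphabet k \<Longrightarrow> async_fellow_travel k ns 8 (w @ [x]) w"
proof -
  assume w: "w \<in> lists (alphabet k)" and x: "x \<in> alphabet k"
  let ?bs = "diag w @ [([x], [])]"
  have an: "anch k ns 1 [] [] ?bs"
  proof (rule anch_append[OF anch_diag])
    have "dword k ns (w @ [x]) w \<le> 1" using dword_app'[of "[x]" k ns w] x by simp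
    then show "anch k ns 1 ([] @ cw (diag w)) ([] @ cu (diag w)) [([x], [])]"
      by (simp add: cw_diag cu_diag anch_Cons anch_Nil dword_eq0)
  qed simp
  have ok: "okbl k ?bs" using okbl_diag[OF w] x by (simp add: okbl_append okbl_def)
  have D: "\<forall>b\<in>set ?bs. length (fst b) \<le> 1 \<and> length (snd b) \<le> 1" using len_diag by auto
  have "async_fellow_travel k ns (1 + 2 * real 1 + 1 + 4) (cw ?bs) (cu ?bs)" by (rule ft_blocks[OF an ok D])
  then show ?thesis by (simp add: cw_diag cu_diag)
qed

lemma ft_refl: "w \<in> lists (alphabet k) \<Longrightarrow> async_fellow_travel k ns 8 w w"
proof -
  assume w: "w \<in> lists (alphabet k)"
  have an: "anch k ns 1 [] [] (diag w)" by (rule anch_diag) simp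
  have D: "\<forall>b\<in>set (diag w). length (fst b) \<le> 1 \<and> length (snd b) \<le> 1" using len_diag by auto
  have "async_fellow_travel k ns (1 + 2 * real 1 + 1 + 4) (cw (diag w)) (cu (diag w))"
    by (rule ft_blocks[OF an okbl_diag[OF w] D])
  then show ?thesis by (simp add: cw_diag cu_diag)
qed

lemma code_bound: "x \<in> alphabet k \<Longrightarrow> code x \<le> 2 * k + 5"
  by (cases x) (auto simp: alphabet_def gens_def code_def)

lemma dfa_in: "q < 2 * k + 8 \<Longrightarrow> x \<in> alphabet k \<Longrightarrow> dfa_d q x < 2 * k + 8"
  using code_bound[of x k] by (auto simp: dfa_d_def)

lemma foldl_in: "q < 2 * k + 8 \<Longrightarrow> w \<in> lists (alphabet k) \<Longrightarrow> foldl dfa_d q w < 2 * k + 8"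
  by (induction w arbitrary: q) (auto simp: dfa_in)

lemma syl_alph: "\<forall>x\<in>set r. fst x \<in> alphabet k \<Longrightarrow> (\<And>c. gpow Ga c \<in> lists (alphabet k)) \<Longrightarrow>
  concat (map (\<lambda>x. fst x # gpow Ga (snd x)) r) \<in> lists (alphabet k)"
  by (induction r) auto

lemma nfw_alph: "okst k p \<Longrightarrow> nfw (m, p) \<in> lists (alphabet k)"
proof -
  assume ok: "okst k p"
  have "\<forall>x\<in>set (snd p). fst x \<in> alphabet k" using ok okb_alph by (auto simp: okst_def)
  moreover have "gpow Ga c \<in> lists (alphabet k)" for c using gpow_alph[of Ga k] by simp
  ultimately have "concat (map (\<lambda>x. fst x # gpow Ga (snd x)) (snd p)) \<in> lists (alphabet k)"
    using syl_alph by blast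
  then show ?thesis using gpow_alph[of Gt k] gpow_alph[of Ga k]
    by (auto simp: nfw_def sylw_def)
qed


theorem mainTheorem1:
  fixes k :: nat and ns :: "nat \<Rightarrow> int"
  assumes "k \<ge> 1"
  shows "async_automatic k ns"
proof -
  let ?S = "alphabet k"
  let ?Q = "{..<2 * k + 8}"
  let ?L = "{w \<in> lists ?S. foldl dfa_d 0 w \<in> ?Q - {1}}"
  let ?K = "5 * real_of_int (Bd k ns) + 8"
  let ?ev = "acts ns (0, 0, [])"
  have B0: "0 \<le> Bd k ns" by (rule Bd_nonneg)
  have Lmem: "w \<in> ?L \<longleftrightarrow> w \<in> lists ?S \<and> acc w" for w
    using foldl_in[of 0 k w] by (auto simp: acc_def)
  have evinfo: "vst (snd (?ev v)) \<and> okst k (snd (?ev v))" if "v \<in> lists ?S" for v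
    using completeness_aux[OF that, of ns] by simp
  have nf: "w \<in> ?L \<Longrightarrow> w = nfw (?ev w)" for w using acc_nf Lmem by blast
  have sd: "eqG k ns u v \<Longrightarrow> ?ev u = ?ev v" for u v using sound[of k ns u v "(0, 0, [])"] by (simp add: vst_def)
  have q1: "\<forall>q\<in>?Q. \<forall>x\<in>?S. dfa_d q x \<in> ?Q" using dfa_in by auto
  have reg: "regular_lang ?S ?L"
    unfolding regular_lang_def
  proof (rule conjI)
    show "?L \<subseteq> lists ?S" by auto
    show "\<exists>(Q :: nat set) q0 \<delta> F. finite Q \<and> q0 \<in> Q \<and> F \<subseteq> Q \<and> (\<forall>q\<in>Q. \<forall>x\<in>?S. \<delta> q x \<in> Q) \<and>
        ?L = {w \<in> lists ?S. foldl \<delta> q0 w \<in> F}"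
      by (rule exI[of _ ?Q], rule exI[of _ 0], rule exI[of _ dfa_d], rule exI[of _ "?Q - {1}"]) (use q1 in auto)
  qed
  have surj: "\<forall>v\<in>lists ?S. \<exists>w\<in>?L. eqG k ns w v"
  proof
    fix v assume v: "v \<in> lists ?S"
    obtain m c0 r where e: "?ev v = (m, c0, r)" by (cases "?ev v") auto
    have vi: "vst (c0, r)" "okst k (c0, r)" using evinfo[OF v] e by auto
    have "nfw (?ev v) \<in> ?L" using Lmem acc_nfw[OF vi(1), of m] nfw_alph[OF vi(2), of m] e by simp
    moreover have "eqG k ns (nfw (?ev v)) v" using completeness[OF v, of ns] by (rule eqG.sym)
    ultimately show "\<exists>w\<in>?L. eqG k ns w v" by blast
  qed
  have fin: "\<forall>v\<in>lists ?S. finite {w \<in> ?L. eqG k ns w v}"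
  proof
    fix v assume v: "v \<in> lists ?S"
    have "{w \<in> ?L. eqG k ns w v} \<subseteq> {nfw (?ev v)}"
    proof
      fix w assume w: "w \<in> {w \<in> ?L. eqG k ns w v}"
      then have "w = nfw (?ev w)" using nf by blast
      moreover have "?ev w = ?ev v" using w sd by blast
      ultimately show "w \<in> {nfw (?ev v)}" by simp
    qed
    then show "finite {w \<in> ?L. eqG k ns w v}" by (rule finite_subset) simp
  qed
  have K8: "8 \<le> ?K" using B0 by simp
  have ft: "\<forall>w\<in>?L. \<forall>u\<in>?L. \<forall>x\<in>?S.
      (eqG k ns u (w @ [x]) \<longrightarrow> async_fellow_travel k ns ?K w u) \<and>
      (eqG k ns u w \<longrightarrow> async_fellow_travel k ns ?K w u)"
  proof (intro ballI conjI impI)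
    fix w u x assume wL: "w \<in> ?L" and uL: "u \<in> ?L" and x: "x \<in> ?S"
    have wl: "w \<in> lists ?S" and aw: "acc w" using wL Lmem by auto
    have ul: "u \<in> lists ?S" using uL by simp
    have wn: "w = nfw (?ev w)" and un: "u = nfw (?ev u)" using nf wL uL by auto
    obtain m c0 r where e: "?ev w = (m, c0, r)" by (cases "?ev w") auto
    have vi: "vst (c0, r)" "okst k (c0, r)" using evinfo[OF wl] e by auto
    {
      assume "eqG k ns u w"
      then have "?ev u = ?ev w" by (rule sd)
      then have "u = w" using wn un by simp
      then show "async_fellow_travel k ns ?K w u" using ft_mono[OF ft_refl[OF wl] K8] by simp
    }
    assume "eqG k ns u (w @ [x])"
    then have eu: "?ev u = act ns (m, c0, r) x" using sd e by simp
    show "async_fellow_travel k ns ?K w u"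
    proof (cases "fst x = Gt")
      case True
      define d where "d = (if snd x then (1::int) else -1)"
      have d: "d \<in> {1, -1}" by (simp add: d_def)
      have xd: "x = tlet d" using True by (cases x) (auto simp: d_def)
      have "?ev u = (m - d, twist ns d (c0, r))" using eu xd act_tlet[OF d] by simp
      then have "u = nfw (m - d, twist ns d (c0, r))" using un by simp
      moreover have "w = nfw (m, c0, r)" using wn e by simp
      ultimately show ?thesis using hard[OF d vi] by simp
    next
      case False
      show ?thesis
      proof (cases "condo (lastopt w) x")
        case True
        have "lastopt w = lastof (m, c0, r)" using wn e last_nfw[of m c0 r] by simp
        then have "nfw (act ns (m, c0, r) x) = nfw (m, c0, r) @ [x]" using step_fwd[OF vi(1) x] True by simp
        then have "u = w @ [x]" using un eu wn e by simp
        then show ?thesis using ft_mono[OF ft_snoc[OF wl x] K8] by simp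
      next
        case c: False
        then have wne: "w \<noteq> []" by (auto simp: lastopt_def)
        then have lx: "x = inv_letter (last w)" using c False by (auto simp: lastopt_def cond_def)
        define w0 where "w0 = butlast w"
        have w0: "w = w0 @ [inv_letter x]" using wne lx by (simp add: w0_def)
        have w0l: "w0 \<in> lists ?S" using wl w0 by (metis append_in_lists_conv)
        have aw0: "acc w0" using aw w0 acc_snoc by metis
        have "?ev w = act ns (?ev w0) (inv_letter x)" using w0 by simp
        moreover have "vst (snd (?ev w0))" using evinfo[OF w0l] by simp
        ultimately have "act ns (?ev w) x = ?ev w0" using act_inv[of "?ev w0" ns "inv_letter x"] by simp
        then have "?ev u = ?ev w0" using eu e by simp
        then have "u = w0" using un acc_nf[OF w0l aw0, of ns] by simp
        moreover have "async_fellow_travel k ns 8 (w0 @ [inv_letter x]) w0" by (rule ft_unsnoc[OF w0l inv_letter_alph[OF x]])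
        ultimately show ?thesis using ft_mono K8 w0 by blast
      qed
    qed
  qed
  show ?thesis unfolding async_automatic_def
    using reg surj fin ft by blast
qed


end
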